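(* Let $k$ be a field and let $\varphi$ be a cubic form on a finite-dimensional vector space $V$ over $k$. If there exists a simple field extension $K/k$ with $[K:k] = 4$ such that $\varphi_K$ is isotropic, then there exists a finite extension $L/k$ with $[L:k] \in \{1,5\}$ such that $\varphi_L$ is isotropic.
   Context: A cubic form is a homogeneous polynomial function of degree $3$. For a field extension $K/k$, $\varphi_K$ denotes the form on $V \otimes_k K$ with $\varphi_K(v \otimes w) = w^3 \varphi(v)$. A form is isotropic if it has a non-zero zero. *)

theory Defs
  imports "HOL-Algebra.Algebra"
begin

text \<open>A cubic form on V = k^n (coordinates w.r.t. a basis of the finite-dimensional
  space V): phi(x) = sum over i,j,l < n of c i j l * x_i * x_j * x_l, with coefficients in k.\<close>
definition cubic_form :: "('a, 'm) ring_scheme \<Rightarrow> nat \<Rightarrow> (nat \<Rightarrow> nat \<Rightarrow> nat \<Rightarrow> 'a) \<Rightarrow> bool" where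
  "cubic_form k n c \<longleftrightarrow> (\<forall>i<n. \<forall>j<n. \<forall>l<n. c i j l \<in> carrier k)"

definition base_change_eval ::
  "('b, 'n) ring_scheme \<Rightarrow> ('a \<Rightarrow> 'b) \<Rightarrow> nat \<Rightarrow> (nat \<Rightarrow> nat \<Rightarrow> nat \<Rightarrow> 'a) \<Rightarrow> (nat \<Rightarrow> 'b) \<Rightarrow> 'b" where
  "base_change_eval L h n c x =
     (\<Oplus>\<^bsub>L\<^esub> i \<in> {..<n}. \<Oplus>\<^bsub>L\<^esub> j \<in> {..<n}. \<Oplus>\<^bsub>L\<^esub> l \<in> {..<n}.
        h (c i j l) \<otimes>\<^bsub>L\<^esub> x i \<otimes>\<^bsub>L\<^esub> x j \<otimes>\<^bsub>L\<^esub> x l)"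

definition isotropic_over ::
  "('b, 'n) ring_scheme \<Rightarrow> ('a \<Rightarrow> 'b) \<Rightarrow> nat \<Rightarrow> (nat \<Rightarrow> nat \<Rightarrow> nat \<Rightarrow> 'a) \<Rightarrow> bool" where
  "isotropic_over L h n c \<longleftrightarrow>
     (\<exists>x. (\<forall>i<n. x i \<in> carrier L) \<and> (\<exists>i<n. x i \<noteq> \<zero>\<^bsub>L\<^esub>) \<and> base_change_eval L h n c x = \<zero>\<^bsub>L\<^esub>)"

definition field_extension :: "('a, 'm) ring_scheme \<Rightarrow> ('b, 'n) ring_scheme \<Rightarrow> ('a \<Rightarrow> 'b) \<Rightarrow> bool" where
  "field_extension k L h \<longleftrightarrow> field L \<and> h \<in> ring_hom k L"

definition ext_degree_eq :: "('a, 'm) ring_scheme \<Rightarrow> ('b, 'n) ring_scheme \<Rightarrow> ('a \<Rightarrow> 'b) \<Rightarrow> nat \<Rightarrow> bool" where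
  "ext_degree_eq k L h d \<longleftrightarrow> ring.dimension L d (h ` carrier k) (carrier L)"

definition simple_field_extension :: "('a, 'm) ring_scheme \<Rightarrow> ('b, 'n) ring_scheme \<Rightarrow> ('a \<Rightarrow> 'b) \<Rightarrow> bool" where
  "simple_field_extension k L h \<longleftrightarrow>
     (\<exists>\<alpha> \<in> carrier L. carrier L = generate_field L (insert \<alpha> (h ` carrier k)))"

end

theory Submission
  imports Defs
begin


lemma bce_hom:
  assumes "ring_hom_cring A B \<psi>"
    and "\<And>i j l. i<n \<Longrightarrow> j<n \<Longrightarrow> l<n \<Longrightarrow> hh (c i j l) \<in> carrier A"
    and "\<And>i. i<n \<Longrightarrow> x i \<in> carrier A"
  shows "\<psi> (base_change_eval A hh n c x) = base_change_eval B (\<psi> \<circ> hh) n c (\<psi> \<circ> x)"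
proof -
  interpret H: ring_hom_cring A B \<psi> by fact
  have inner: "\<psi> (\<Oplus>\<^bsub>A\<^esub> l\<in>{..<n}. hh (c i j l) \<otimes>\<^bsub>A\<^esub> x i \<otimes>\<^bsub>A\<^esub> x j \<otimes>\<^bsub>A\<^esub> x l)
     = (\<Oplus>\<^bsub>B\<^esub> l\<in>{..<n}. \<psi> (hh (c i j l)) \<otimes>\<^bsub>B\<^esub> \<psi> (x i) \<otimes>\<^bsub>B\<^esub> \<psi> (x j) \<otimes>\<^bsub>B\<^esub> \<psi> (x l))"
    if "i<n" "j<n" for i j
    using that assms(2,3) by (subst H.hom_finsum) (auto simp: Pi_def intro!: H.S.finsum_cong')
  have mid: "\<psi> (\<Oplus>\<^bsub>A\<^esub> j\<in>{..<n}. \<Oplus>\<^bsub>A\<^esub> l\<in>{..<n}. hh (c i j l) \<otimes>\<^bsub>A\<^esub> x i \<otimes>\<^bsub>A\<^esub> x j \<otimes>\<^bsub>A\<^esub> x l)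
     = (\<Oplus>\<^bsub>B\<^esub> j\<in>{..<n}. \<Oplus>\<^bsub>B\<^esub> l\<in>{..<n}. \<psi> (hh (c i j l)) \<otimes>\<^bsub>B\<^esub> \<psi> (x i) \<otimes>\<^bsub>B\<^esub> \<psi> (x j) \<otimes>\<^bsub>B\<^esub> \<psi> (x l))"
    if "i<n" for i
    using that assms(2,3) inner by (subst H.hom_finsum) (auto simp: Pi_def H.R.finsum_closed intro!: H.S.finsum_cong')
  show ?thesis unfolding base_change_eval_def
    using assms(2,3) mid by (subst H.hom_finsum) (auto simp: Pi_def H.R.finsum_closed intro!: H.S.finsum_cong')
qed

lemma (in ring) bce_closed:
  assumes "\<And>i j l. i<n \<Longrightarrow> j<n \<Longrightarrow> l<n \<Longrightarrow> hh (c i j l) \<in> carrier R"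
    and "\<And>i. i<n \<Longrightarrow> x i \<in> carrier R"
  shows "base_change_eval R hh n c x \<in> carrier R"
  unfolding base_change_eval_def
    using assms by (auto simp: Pi_def intro!: finsum_closed)

lemma (in cring) bce_smult:
  assumes "s \<in> carrier R"
    and "\<And>i j l. i<n \<Longrightarrow> j<n \<Longrightarrow> l<n \<Longrightarrow> hh (c i j l) \<in> carrier R"
    and "\<And>i. i<n \<Longrightarrow> x i \<in> carrier R"
  shows "base_change_eval R hh n c (\<lambda>i. s \<otimes> x i) = s [^] (3::nat) \<otimes> base_change_eval R hh n c x"
proof -
  have s3: "s [^] (3::nat) = s \<otimes> s \<otimes> s" using assms(1) by (simp add: numeral_3_eq_3 m_assoc)
  have trm: "hh (c i j l) \<otimes> (s \<otimes> x i) \<otimes> (s \<otimes> x j) \<otimes> (s \<otimes> x l)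
     = s [^] (3::nat) \<otimes> (hh (c i j l) \<otimes> x i \<otimes> x j \<otimes> x l)" if "i<n" "j<n" "l<n" for i j l
    unfolding s3 using that assms by (simp add: m_ac)
  have "base_change_eval R hh n c (\<lambda>i. s \<otimes> x i) =
     (\<Oplus> i\<in>{..<n}. \<Oplus> j\<in>{..<n}. \<Oplus> l\<in>{..<n}. s [^] (3::nat) \<otimes> (hh (c i j l) \<otimes> x i \<otimes> x j \<otimes> x l))"
    unfolding base_change_eval_def using trm assms
    by (auto simp: Pi_def intro!: finsum_cong' finsum_closed)
  also have "\<dots> = (\<Oplus> i\<in>{..<n}. \<Oplus> j\<in>{..<n}. s [^] (3::nat) \<otimes> (\<Oplus> l\<in>{..<n}. (hh (c i j l) \<otimes> x i \<otimes> x j \<otimes> x l)))"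
    using assms by (auto simp: Pi_def finsum_rdistr intro!: finsum_cong' finsum_closed)
  also have "\<dots> = (\<Oplus> i\<in>{..<n}. s [^] (3::nat) \<otimes> (\<Oplus> j\<in>{..<n}. \<Oplus> l\<in>{..<n}. (hh (c i j l) \<otimes> x i \<otimes> x j \<otimes> x l)))"
    using assms by (auto simp: Pi_def finsum_rdistr intro!: finsum_cong' finsum_closed)
  also have "\<dots> = s [^] (3::nat) \<otimes> base_change_eval R hh n c x"
    unfolding base_change_eval_def
    using assms by (auto simp: Pi_def finsum_rdistr intro!: finsum_cong' finsum_closed)
  finally show ?thesis .
qed


context domain
begin

lemma coeff_top_mult:
  assumes "f \<in> carrier (poly_ring R)" "g \<in> carrier (poly_ring R)"
    and "length f \<le> Suc a" "length g \<le> Suc b"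
  shows "length (f \<otimes>\<^bsub>poly_ring R\<^esub> g) \<le> Suc (a+b)"
    and "coeff (f \<otimes>\<^bsub>poly_ring R\<^esub> g) (a+b) = coeff f a \<otimes> coeff g b"
proof -
  have pf: "polynomial (carrier R) f" and pg: "polynomial (carrier R) g"
    using assms(1,2) univ_poly_carrier by blast+
  have sf: "set f \<subseteq> carrier R" and sg: "set g \<subseteq> carrier R"
    using pf pg polynomial_in_carrier carrier_is_subring by blast+
  have m: "f \<otimes>\<^bsub>poly_ring R\<^esub> g = poly_mult f g" by (simp add: univ_poly_mult)
  have "length (poly_mult f g) \<le> Suc (a+b) \<and> coeff (poly_mult f g) (a+b) = coeff f a \<otimes> coeff g b"
  proof (cases "f = [] \<or> g = []")
    case True
    then show ?thesis using poly_mult_zero[OF sf] poly_mult_zero[OF sg] sf sg by auto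
  next
    case False
    then have fn: "f \<noteq> []" and gn: "g \<noteq> []" by auto
    have deg: "degree (poly_mult f g) = degree f + degree g"
      using poly_mult_degree_eq[OF carrier_is_subring pf pg] False by simp
    have ne: "poly_mult f g \<noteq> []"
      using poly_mult_integral[OF carrier_is_subring pf pg] fn gn by auto
    have len: "length (poly_mult f g) \<le> Suc (a+b)"
      using deg ne assms(3,4) fn gn by (cases "poly_mult f g") auto
    show ?thesis
    proof (cases "degree f = a \<and> degree g = b")
      case True
      have ca: "coeff f a = lead_coeff f" using True lead_coeff_simp[OF fn] by metis
      have cb: "coeff g b = lead_coeff g" using True lead_coeff_simp[OF gn] by metis
      have "coeff (poly_mult f g) (a+b) = lead_coeff f \<otimes> lead_coeff g"
        using poly_mult_lead_coeff_aux[OF carrier_is_subring pf pg fn gn] True by metis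
      then show ?thesis using len ca cb by simp
    next
      case False
      then have "degree f < a \<or> degree g < b" using assms(3,4) by auto
      then have z: "coeff f a \<otimes> coeff g b = \<zero>"
        using coeff_degree[of f a] coeff_degree[of g b] sf sg by auto
      have "degree (poly_mult f g) < a + b" using deg assms(3,4) False by auto
      then show ?thesis using coeff_degree z len by auto
    qed
  qed
  then show "length (f \<otimes>\<^bsub>poly_ring R\<^esub> g) \<le> Suc (a+b)"
    and "coeff (f \<otimes>\<^bsub>poly_ring R\<^esub> g) (a+b) = coeff f a \<otimes> coeff g b" using m by auto
qed

lemma coeff_top_add:
  assumes "f \<in> carrier (poly_ring R)" "g \<in> carrier (poly_ring R)"
    and "length f \<le> Suc a" "length g \<le> Suc a"
  shows "length (f \<oplus>\<^bsub>poly_ring R\<^esub> g) \<le> Suc a"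
    and "coeff (f \<oplus>\<^bsub>poly_ring R\<^esub> g) a = coeff f a \<oplus> coeff g a"
proof -
  have pf: "polynomial (carrier R) f" and pg: "polynomial (carrier R) g"
    using assms(1,2) univ_poly_carrier by blast+
  have sf: "set f \<subseteq> carrier R" and sg: "set g \<subseteq> carrier R"
    using pf pg polynomial_in_carrier carrier_is_subring by blast+
  have m: "f \<oplus>\<^bsub>poly_ring R\<^esub> g = poly_add f g" by (simp add: univ_poly_add)
  show "length (f \<oplus>\<^bsub>poly_ring R\<^esub> g) \<le> Suc a"
    using m poly_add_length_le[of f g] assms(3,4) by simp
  show "coeff (f \<oplus>\<^bsub>poly_ring R\<^esub> g) a = coeff f a \<oplus> coeff g a"
    using m poly_add_coeff[OF sf sg] by simp
qed

lemma coeff_top_finsum: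
  assumes "finite A" "\<And>i. i \<in> A \<Longrightarrow> F i \<in> carrier (poly_ring R)"
    and "\<And>i. i \<in> A \<Longrightarrow> length (F i) \<le> Suc a"
  shows "length (finsum (poly_ring R) F A) \<le> Suc a \<and>
         coeff (finsum (poly_ring R) F A) a = (\<Oplus>i\<in>A. coeff (F i) a)"
  using assms
proof (induction A rule: finite_induct)
  case empty
  interpret P: cring "poly_ring R" using univ_poly_is_cring[OF carrier_is_subring] .
  have "finsum (poly_ring R) F {} = []" using P.finsum_empty univ_poly_zero by metis
  then show ?case by simp
next
  case (insert x A)
  interpret P: cring "poly_ring R" using univ_poly_is_cring[OF carrier_is_subring] .
  have FP: "F \<in> A \<rightarrow> carrier (poly_ring R)" using insert(4) by blast
  have FA: "finsum (poly_ring R) F A \<in> carrier (poly_ring R)"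
    using P.finsum_closed[OF FP] .
  have Fx: "F x \<in> carrier (poly_ring R)" using insert(4) by blast
  have eq: "finsum (poly_ring R) F (insert x A) = F x \<oplus>\<^bsub>poly_ring R\<^esub> finsum (poly_ring R) F A"
    using P.finsum_insert[OF insert(1,2) FP Fx] .
  have IH: "length (finsum (poly_ring R) F A) \<le> Suc a \<and>
         coeff (finsum (poly_ring R) F A) a = (\<Oplus>i\<in>A. coeff (F i) a)"
    using insert(3) insert(4) insert(5) by blast
  have cin: "coeff (F i) a \<in> carrier R" if "F i \<in> carrier (poly_ring R)" for i
  proof -
    have "set (F i) \<subseteq> carrier R"
      using that univ_poly_carrier polynomial_in_carrier carrier_is_subring by blast
    then show ?thesis by (rule coeff_in_carrier)
  qed
  have cs: "(\<lambda>i. coeff (F i) a) \<in> A \<rightarrow> carrier R"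
    using cin insert(4) by blast
  have ins: "(\<Oplus>i\<in>insert x A. coeff (F i) a) = coeff (F x) a \<oplus> (\<Oplus>i\<in>A. coeff (F i) a)"
    using finsum_insert[OF insert(1,2) cs cin[OF Fx]] .
  have lx: "length (F x) \<le> Suc a" using insert(5) by blast
  show ?case
    unfolding eq ins using coeff_top_add[OF Fx FA lx] IH by simp
qed

lemma poly_of_const_props:
  assumes "a \<in> carrier R"
  shows "poly_of_const a \<in> carrier (poly_ring R)" "length (poly_of_const a) \<le> Suc 0"
    "coeff (poly_of_const a) 0 = a"
proof -
  show "poly_of_const a \<in> carrier (poly_ring R)"
    using assms unfolding poly_of_const_def univ_poly_carrier[symmetric]
    by (simp add: polynomial_def)
  show "length (poly_of_const a) \<le> Suc 0" unfolding poly_of_const_def by simp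
  show "coeff (poly_of_const a) 0 = a" unfolding poly_of_const_def by simp
qed

end

context domain begin
lemma T_lemma:
  assumes c: "c \<in> carrier R"
    and v: "\<And>j. j<n \<Longrightarrow> v j \<in> carrier (poly_ring R)"
    and vl: "\<And>j. j<n \<Longrightarrow> length (v j) \<le> Suc e"
    and that: "i<n" "j<n" "l<n"
  shows "poly_of_const c \<otimes>\<^bsub>poly_ring R\<^esub> v i \<otimes>\<^bsub>poly_ring R\<^esub> v j \<otimes>\<^bsub>poly_ring R\<^esub> v l \<in> carrier (poly_ring R) \<and>
     length (poly_of_const c \<otimes>\<^bsub>poly_ring R\<^esub> v i \<otimes>\<^bsub>poly_ring R\<^esub> v j \<otimes>\<^bsub>poly_ring R\<^esub> v l) \<le> Suc (3*e) \<and>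
     coeff (poly_of_const c \<otimes>\<^bsub>poly_ring R\<^esub> v i \<otimes>\<^bsub>poly_ring R\<^esub> v j \<otimes>\<^bsub>poly_ring R\<^esub> v l) (3*e)
       = c \<otimes> coeff (v i) e \<otimes> coeff (v j) e \<otimes> coeff (v l) e"
proof -
  interpret P: cring "poly_ring R" using univ_poly_is_cring[OF carrier_is_subring] .
  note pc = poly_of_const_props[OF c]
  have c1: "poly_of_const c \<otimes>\<^bsub>poly_ring R\<^esub> v i \<in> carrier (poly_ring R)"
      using P.m_closed[OF pc(1) v[OF that(1)]] .
  have c2: "poly_of_const c \<otimes>\<^bsub>poly_ring R\<^esub> v i \<otimes>\<^bsub>poly_ring R\<^esub> v j \<in> carrier (poly_ring R)"
      using P.m_closed[OF c1 v[OF that(2)]] .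
  have c3: "poly_of_const c \<otimes>\<^bsub>poly_ring R\<^esub> v i \<otimes>\<^bsub>poly_ring R\<^esub> v j \<otimes>\<^bsub>poly_ring R\<^esub> v l \<in> carrier (poly_ring R)"
      using P.m_closed[OF c2 v[OF that(3)]] .
  note m1 = coeff_top_mult[OF pc(1) v[OF that(1)] pc(2) vl[OF that(1)]]
  note m2 = coeff_top_mult[OF c1 v[OF that(2)] m1(1) vl[OF that(2)]]
  note m3 = coeff_top_mult[OF c2 v[OF that(3)] m2(1) vl[OF that(3)]]
  have e3: "0+e+e+e = 3*e" by simp
  show ?thesis using c3 m3 m2(2) m1(2) pc(3) unfolding e3 by simp
qed

lemma bce_top:
  assumes c: "\<And>i j l. i<n \<Longrightarrow> j<n \<Longrightarrow> l<n \<Longrightarrow> c i j l \<in> carrier R"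
    and v: "\<And>j. j<n \<Longrightarrow> v j \<in> carrier (poly_ring R)"
    and vl: "\<And>j. j<n \<Longrightarrow> length (v j) \<le> Suc e"
  shows "length (base_change_eval (poly_ring R) poly_of_const n c v) \<le> Suc (3*e) \<and>
    coeff (base_change_eval (poly_ring R) poly_of_const n c v) (3*e)
      = base_change_eval R (\<lambda>x. x) n c (\<lambda>j. coeff (v j) e)"
proof -
  interpret P: cring "poly_ring R" using univ_poly_is_cring[OF carrier_is_subring] .
  define T where "T = (\<lambda>i j l. poly_of_const (c i j l) \<otimes>\<^bsub>poly_ring R\<^esub> v i \<otimes>\<^bsub>poly_ring R\<^esub> v j \<otimes>\<^bsub>poly_ring R\<^esub> v l)"
  define W where "W = (\<lambda>i j l. c i j l \<otimes> coeff (v i) e \<otimes> coeff (v j) e \<otimes> coeff (v l) e)"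
  have cv: "coeff (v j) e \<in> carrier R" if "j<n" for j
  proof -
    have "polynomial (carrier R) (v j)" using v[OF that] unfolding univ_poly_carrier[symmetric] .
    then have "set (v j) \<subseteq> carrier R" by (rule polynomial_in_carrier[OF carrier_is_subring])
    then show ?thesis by (rule coeff_in_carrier)
  qed
  have W: "W i j l \<in> carrier R" if "i<n" "j<n" "l<n" for i j l
    unfolding W_def using that c cv by simp
  have T: "T i j l \<in> carrier (poly_ring R) \<and> length (T i j l) \<le> Suc (3*e) \<and>
     coeff (T i j l) (3*e) = W i j l"
    if "i<n" "j<n" "l<n" for i j l
    unfolding T_def W_def using T_lemma[OF c[OF that] v vl that] .
  define S1 where "S1 = (\<lambda>i j. finsum (poly_ring R) (T i j) {..<n})"
  have S1: "S1 i j \<in> carrier (poly_ring R) \<and> length (S1 i j) \<le> Suc (3*e) \<and>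
      coeff (S1 i j) (3*e) = (\<Oplus>l\<in>{..<n}. W i j l)"
    if "i<n" "j<n" for i j
  proof -
    have a: "T i j \<in> {..<n} \<rightarrow> carrier (poly_ring R)"
    proof (rule Pi_I)
      fix l assume "l \<in> {..<n}" then show "T i j l \<in> carrier (poly_ring R)" using T[OF that, of l] by simp
    qed
    have b: "S1 i j \<in> carrier (poly_ring R)"
      unfolding S1_def using P.finsum_closed[OF a] .
    have "length (S1 i j) \<le> Suc (3*e) \<and> coeff (S1 i j) (3*e) = (\<Oplus>l\<in>{..<n}. coeff (T i j l) (3*e))"
      unfolding S1_def
      by (rule coeff_top_finsum) (use T that in auto)
    moreover have "(\<Oplus>l\<in>{..<n}. coeff (T i j l) (3*e)) = (\<Oplus>l\<in>{..<n}. W i j l)"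
      using T that W by (intro finsum_cong') auto
    ultimately show ?thesis using b by simp
  qed
  define S2 where "S2 = (\<lambda>i. finsum (poly_ring R) (S1 i) {..<n})"
  have W1: "(\<Oplus>l\<in>{..<n}. W i j l) \<in> carrier R" if "i<n" "j<n" for i j
    using W that by (intro finsum_closed) auto
  have S2: "S2 i \<in> carrier (poly_ring R) \<and> length (S2 i) \<le> Suc (3*e) \<and>
      coeff (S2 i) (3*e) = (\<Oplus>j\<in>{..<n}. \<Oplus>l\<in>{..<n}. W i j l)"
    if "i<n" for i
  proof -
    have a: "S1 i \<in> {..<n} \<rightarrow> carrier (poly_ring R)"
    proof (rule Pi_I)
      fix j assume "j \<in> {..<n}" then show "S1 i j \<in> carrier (poly_ring R)" using S1[OF that, of j] by simp
    qed
    have b: "S2 i \<in> carrier (poly_ring R)"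
      unfolding S2_def using P.finsum_closed[OF a] .
    have "length (S2 i) \<le> Suc (3*e) \<and> coeff (S2 i) (3*e) = (\<Oplus>j\<in>{..<n}. coeff (S1 i j) (3*e))"
      unfolding S2_def
      by (rule coeff_top_finsum) (use S1 that in auto)
    moreover have "(\<Oplus>j\<in>{..<n}. coeff (S1 i j) (3*e)) = (\<Oplus>j\<in>{..<n}. \<Oplus>l\<in>{..<n}. W i j l)"
      using S1 that W1 by (intro finsum_cong') auto
    ultimately show ?thesis using b by simp
  qed
  have W2: "(\<Oplus>j\<in>{..<n}. \<Oplus>l\<in>{..<n}. W i j l) \<in> carrier R" if "i<n" for i
    using W1 that by (intro finsum_closed) auto
  have "length (finsum (poly_ring R) S2 {..<n}) \<le> Suc (3*e) \<and>
      coeff (finsum (poly_ring R) S2 {..<n}) (3*e) = (\<Oplus>i\<in>{..<n}. coeff (S2 i) (3*e))"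
    by (rule coeff_top_finsum) (use S2 in auto)
  moreover have "(\<Oplus>i\<in>{..<n}. coeff (S2 i) (3*e)) = (\<Oplus>i\<in>{..<n}. \<Oplus>j\<in>{..<n}. \<Oplus>l\<in>{..<n}. W i j l)"
    using S2 W2 by (intro finsum_cong') auto
  moreover have "base_change_eval (poly_ring R) poly_of_const n c v = finsum (poly_ring R) S2 {..<n}"
    unfolding base_change_eval_def S2_def S1_def T_def ..
  moreover have "base_change_eval R (\<lambda>x. x) n c (\<lambda>j. coeff (v j) e) = (\<Oplus>i\<in>{..<n}. \<Oplus>j\<in>{..<n}. \<Oplus>l\<in>{..<n}. W i j l)"
    unfolding base_change_eval_def W_def ..
  ultimately show ?thesis by simp
qed

end


lemma (in ring) bce_cong:
  assumes "\<And>j. j<n \<Longrightarrow> x j = y j"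
    and "\<And>i j l. i<n \<Longrightarrow> j<n \<Longrightarrow> l<n \<Longrightarrow> hh (c i j l) \<in> carrier R"
    and "\<And>i. i<n \<Longrightarrow> y i \<in> carrier R"
  shows "base_change_eval R hh n c x = base_change_eval R hh n c y"
  unfolding base_change_eval_def using assms
  by (auto intro!: finsum_cong' finsum_closed)

context field
begin

lemma pdiv_iff: "p pdivides q \<longleftrightarrow> (\<exists>r\<in>carrier (poly_ring R). q = p \<otimes>\<^bsub>poly_ring R\<^esub> r)"
  unfolding pdivides_def factor_def ..

lemma poly_carrier_set:
  assumes "f \<in> carrier (poly_ring R)" shows "set f \<subseteq> carrier R"
proof -
  have "polynomial (carrier R) f" using assms unfolding univ_poly_carrier[symmetric] .
  then show ?thesis by (rule polynomial_in_carrier[OF carrier_is_subring])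
qed

lemma poly_mult_deg:
  assumes "f \<in> carrier (poly_ring R)" "g \<in> carrier (poly_ring R)" "f \<noteq> []" "g \<noteq> []"
  shows "f \<otimes>\<^bsub>poly_ring R\<^esub> g \<noteq> []" "degree (f \<otimes>\<^bsub>poly_ring R\<^esub> g) = degree f + degree g"
proof -
  have pf: "polynomial (carrier R) f" and pg: "polynomial (carrier R) g"
    using assms(1,2) univ_poly_carrier by blast+
  show "f \<otimes>\<^bsub>poly_ring R\<^esub> g \<noteq> []"
    using poly_mult_integral[OF carrier_is_subring pf pg] assms(3,4) by (auto simp: univ_poly_mult)
  show "degree (f \<otimes>\<^bsub>poly_ring R\<^esub> g) = degree f + degree g"
    using poly_mult_degree_eq[OF carrier_is_subring pf pg] assms(3,4) by (simp add: univ_poly_mult)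
qed

lemma poly_mult_zero_r:
  assumes "f \<in> carrier (poly_ring R)" shows "f \<otimes>\<^bsub>poly_ring R\<^esub> [] = []"
  using poly_mult_zero(2)[OF poly_carrier_set[OF assms]] by (simp add: univ_poly_mult)

lemma lead_nonzero:
  assumes "f \<in> carrier (poly_ring R)" "f \<noteq> []" shows "lead_coeff f \<noteq> \<zero>"
proof -
  have "polynomial (carrier R) f" using assms(1) unfolding univ_poly_carrier[symmetric] .
  then show ?thesis using assms(2) unfolding polynomial_def by auto
qed

lemma coeff_e_zero_len:
  assumes "f \<in> carrier (poly_ring R)" "length f \<le> Suc e" "coeff f e = \<zero>"
  shows "length f \<le> e"
proof (rule ccontr)
  assume "\<not> length f \<le> e"
  then have l: "length f = Suc e" using assms(2) by simp
  then have ne: "f \<noteq> []" by auto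
  have "coeff f (degree f) = lead_coeff f" using lead_coeff_simp[OF ne] .
  moreover have "degree f = e" using l by simp
  ultimately show False using assms(3) lead_nonzero[OF assms(1) ne] by simp
qed

lemma pprime_p:
  assumes "p \<in> carrier (poly_ring R)" "pirreducible (carrier R) p"
    "a \<in> carrier (poly_ring R)" "b \<in> carrier (poly_ring R)"
    "p pdivides (a \<otimes>\<^bsub>poly_ring R\<^esub> b)"
  shows "p pdivides a \<or> p pdivides b"
proof -
  have "pprime (carrier R) p" using pprime_iff_pirreducible[OF carrier_is_subfield assms(1)] assms(2) by simp
  then show ?thesis using pprimeE(3)[OF carrier_is_subfield assms(1) _ assms(3,4,5)] by blast
qed

lemma pdiv_trans:
  assumes "p \<in> carrier (poly_ring R)" "p pdivides q" "q pdivides r"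
  shows "p pdivides r"
proof -
  interpret P: cring "poly_ring R" using univ_poly_is_cring[OF carrier_is_subring] .
  show ?thesis using assms P.divides_trans unfolding pdivides_def by blast
qed

lemma pdiv_multr:
  assumes "p \<in> carrier (poly_ring R)" "a \<in> carrier (poly_ring R)" "b \<in> carrier (poly_ring R)" "p pdivides a"
  shows "p pdivides (b \<otimes>\<^bsub>poly_ring R\<^esub> a)"
proof -
  interpret P: cring "poly_ring R" using univ_poly_is_cring[OF carrier_is_subring] .
  obtain r where r: "r \<in> carrier (poly_ring R)" "a = p \<otimes>\<^bsub>poly_ring R\<^esub> r" using assms(4) pdiv_iff by blast
  have "b \<otimes>\<^bsub>poly_ring R\<^esub> a = p \<otimes>\<^bsub>poly_ring R\<^esub> (b \<otimes>\<^bsub>poly_ring R\<^esub> r)"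
    using r assms by (simp add: P.m_lcomm)
  then show ?thesis unfolding pdiv_iff using r assms by blast
qed

lemma pdiv_self: assumes "p \<in> carrier (poly_ring R)" shows "p pdivides p"
proof -
  interpret P: cring "poly_ring R" using univ_poly_is_cring[OF carrier_is_subring] .
  show ?thesis unfolding pdivides_def using P.divides_refl[OF assms] .
qed

end


context field
begin

lemma poc_carrier:
  assumes c: "\<And>i j l. i<n \<Longrightarrow> j<n \<Longrightarrow> l<n \<Longrightarrow> c i j l \<in> carrier R"
  shows "\<And>i j l. i<n \<Longrightarrow> j<n \<Longrightarrow> l<n \<Longrightarrow> poly_of_const (c i j l) \<in> carrier (poly_ring R)"
  using poly_of_const_props(1) c by blast

lemma core:
  assumes c: "\<And>i j l. i<n \<Longrightarrow> j<n \<Longrightarrow> l<n \<Longrightarrow> c i j l \<in> carrier R"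
    and p: "p \<in> carrier (poly_ring R)" "pirreducible (carrier R) p"
    and v0: "\<And>j. j<n \<Longrightarrow> v0 j \<in> carrier (poly_ring R)" "\<And>j. j<n \<Longrightarrow> length (v0 j) \<le> degree p"
      "\<exists>j<n. \<not> p pdivides v0 j" "p pdivides base_change_eval (poly_ring R) poly_of_const n c v0"
  shows "(\<exists>w. (\<forall>i<n. w i \<in> carrier R) \<and> (\<exists>i<n. w i \<noteq> \<zero>) \<and> base_change_eval R (\<lambda>x. x) n c w = \<zero>) \<or>
    (\<exists>G\<in>carrier (poly_ring R). G \<noteq> [] \<and> (\<exists>e<degree p. degree G + degree p = 3*e) \<and>
      (\<forall>q\<in>carrier (poly_ring R). pirreducible (carrier R) q \<longrightarrow> q pdivides G \<longrightarrow>
         (\<exists>v. (\<forall>j<n. v j \<in> carrier (poly_ring R)) \<and> (\<exists>j<n. \<not> q pdivides v j) \<and>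
              q pdivides base_change_eval (poly_ring R) poly_of_const n c v)))"
proof -
  interpret P: cring "poly_ring R" using univ_poly_is_cring[OF carrier_is_subring] .
  let ?Phi = "\<lambda>v. base_change_eval (poly_ring R) poly_of_const n c v"
  have pc: "\<And>i j l. i<n \<Longrightarrow> j<n \<Longrightarrow> l<n \<Longrightarrow> poly_of_const (c i j l) \<in> carrier (poly_ring R)"
    using poly_of_const_props(1) c by blast
  define Good where "Good e \<longleftrightarrow> (\<exists>v. (\<forall>j<n. v j \<in> carrier (poly_ring R) \<and> length (v j) \<le> Suc e) \<and>
     (\<exists>j<n. \<not> p pdivides v j) \<and> p pdivides ?Phi v)" for e
  have dp: "degree p \<ge> 1" using pirreducible_degree[OF carrier_is_subfield p] .
  have G0: "Good (degree p - 1)" unfolding Good_def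
  proof (intro exI[of _ v0] conjI allI impI)
    fix j assume "j<n"
    then show "v0 j \<in> carrier (poly_ring R)" "length (v0 j) \<le> Suc (degree p - 1)"
      using v0(1,2)[OF \<open>j<n\<close>] dp by auto
  qed (use v0 in auto)
  define e where "e = (LEAST e. Good e)"
  have Ge: "Good e" unfolding e_def using G0 by (rule LeastI)
  have emin: "e \<le> e'" if "Good e'" for e' unfolding e_def using that by (rule Least_le)
  have elt: "e < degree p" using emin[OF G0] dp by simp
  obtain v where vc: "\<And>j. j<n \<Longrightarrow> v j \<in> carrier (poly_ring R)"
    and vl: "\<And>j. j<n \<Longrightarrow> length (v j) \<le> Suc e"
    and vnd: "\<exists>j<n. \<not> p pdivides v j" and vF: "p pdivides ?Phi v"
    using Ge unfolding Good_def by blast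
  have Phiv: "?Phi v \<in> carrier (poly_ring R)" using P.bce_closed[where n=n and hh=poly_of_const and c=c and x=v, OF pc vc] .
  have top: "\<exists>j<n. coeff (v j) e \<noteq> \<zero>"
  proof (rule ccontr)
    assume "\<not> (\<exists>j<n. coeff (v j) e \<noteq> \<zero>)"
    then have len: "length (v j) \<le> e" if "j<n" for j
      using coeff_e_zero_len[OF vc[OF that] vl[OF that]] that by blast
    show False
    proof (cases e)
      case 0
      then have "v j = []" if "j<n" for j using len[OF that] by simp
      then show False using vnd pdivides_zero[OF carrier_is_subring p(1)] by auto
    next
      case (Suc e')
      have "Good e'" unfolding Good_def
        using vc len vnd vF Suc by (intro exI[of _ v]) auto
      then show False using emin Suc by force
    qed
  qed
  define w where "w = (\<lambda>j. coeff (v j) e)"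
  have wc: "w i \<in> carrier R" if "i<n" for i
    unfolding w_def using coeff_in_carrier[OF poly_carrier_set[OF vc[OF that]]] .
  show ?thesis
  proof (cases "base_change_eval R (\<lambda>x. x) n c w = \<zero>")
    case True
    have "\<exists>i<n. w i \<noteq> \<zero>" using top unfolding w_def .
    then show ?thesis using wc True by (intro disjI1 exI[of _ w] conjI) auto
  next
    case False
    have bt: "length (?Phi v) \<le> Suc (3*e)" "coeff (?Phi v) (3*e) = base_change_eval R (\<lambda>x. x) n c w"
      using bce_top[OF c vc vl] unfolding w_def by auto
    have cnz: "coeff (?Phi v) (3*e) \<noteq> \<zero>" using bt(2) False by simp
    have "\<not> length (?Phi v) \<le> 3*e"
    proof
      assume "length (?Phi v) \<le> 3*e"
      then have "coeff (?Phi v) (3*e) = \<zero>" by (rule coeff_length)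
      then show False using cnz by simp
    qed
    then have lenF: "length (?Phi v) = Suc (3*e)" using bt(1) by simp
    then have neF: "?Phi v \<noteq> []" and degF: "degree (?Phi v) = 3*e" by auto
    obtain G where G: "G \<in> carrier (poly_ring R)" "?Phi v = p \<otimes>\<^bsub>poly_ring R\<^esub> G"
      using vF pdiv_iff by blast
    have pne: "p \<noteq> []" using dp by auto
    have Gne: "G \<noteq> []"
    proof
      assume "G = []"
      then have "?Phi v = []" using G(2) poly_mult_zero_r[OF p(1)] by simp
      then show False using neF by simp
    qed
    have degG: "degree G + degree p = 3*e"
      using poly_mult_deg(2)[OF p(1) G(1) pne Gne] G(2) degF by simp
    have good: "\<exists>v. (\<forall>j<n. v j \<in> carrier (poly_ring R)) \<and> (\<exists>j<n. \<not> q pdivides v j) \<and> q pdivides ?Phi v"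
      if q: "q \<in> carrier (poly_ring R)" "pirreducible (carrier R) q" "q pdivides G" for q
    proof -
      have qF: "q pdivides ?Phi v"
        using pdiv_multr[OF q(1) G(1) p(1) q(3)] G(2) by simp
      have dq: "degree q \<ge> 1" using pirreducible_degree[OF carrier_is_subfield q(1,2)] .
      have "\<exists>j<n. \<not> q pdivides v j"
      proof (rule ccontr)
        assume "\<not> (\<exists>j<n. \<not> q pdivides v j)"
        then have allq: "q pdivides v j" if "j<n" for j using that by blast
        obtain j0 where j0: "j0 < n" "\<not> p pdivides v j0" using vnd by blast
        have vj0: "v j0 \<noteq> []" using j0 pdivides_zero[OF carrier_is_subring p(1)] by auto
        have "degree q \<le> degree (v j0)"
          using pdivides_imp_degree_le[OF carrier_is_subring q(1) vc[OF j0(1)] vj0 allq[OF j0(1)]] .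
        also have "\<dots> \<le> e" using vl[OF j0(1)] by simp
        finally have qe: "degree q \<le> e" .
        define v' where "v' = (\<lambda>j. SOME r. r \<in> carrier (poly_ring R) \<and> v j = q \<otimes>\<^bsub>poly_ring R\<^esub> r)"
        have v': "v' j \<in> carrier (poly_ring R) \<and> v j = q \<otimes>\<^bsub>poly_ring R\<^esub> v' j" if "j<n" for j
        proof -
          have "\<exists>r. r \<in> carrier (poly_ring R) \<and> v j = q \<otimes>\<^bsub>poly_ring R\<^esub> r"
            using allq[OF that] pdiv_iff by blast
          then show ?thesis unfolding v'_def by (rule someI_ex)
        qed
        have v'l: "length (v' j) \<le> Suc (e - degree q)" if "j<n" for j
        proof (cases "v' j = []")
          case True then show ?thesis by simp
        next
          case False
          have qne: "q \<noteq> []" using dq by auto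
          have "degree (v j) = degree q + degree (v' j)"
            using poly_mult_deg(2)[OF q(1) conjunct1[OF v'[OF that]] qne False] v'[OF that] by simp
          moreover have "degree (v j) \<le> e" using vl[OF that] by simp
          ultimately have "degree (v' j) \<le> e - degree q" by simp
          then show ?thesis using False by simp
        qed
        have q3: "q [^]\<^bsub>poly_ring R\<^esub> (3::nat) = q \<otimes>\<^bsub>poly_ring R\<^esub> (q \<otimes>\<^bsub>poly_ring R\<^esub> q)"
          using q(1) by (simp add: numeral_3_eq_3 P.m_assoc)
        have v'c: "v' j \<in> carrier (poly_ring R)" if "j<n" for j using v'[OF that] by (rule conjunct1)
        have veq: "v j = q \<otimes>\<^bsub>poly_ring R\<^esub> v' j" if "j<n" for j using v'[OF that] by (rule conjunct2)
        have qv'c: "q \<otimes>\<^bsub>poly_ring R\<^esub> v' j \<in> carrier (poly_ring R)" if "j<n" for j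
          using P.m_closed[OF q(1) v'c[OF that]] .
        have Phiv': "?Phi v' \<in> carrier (poly_ring R)"
          using P.bce_closed[where n=n and hh=poly_of_const and c=c and x=v', OF pc v'c] .
        have "?Phi v = ?Phi (\<lambda>j. q \<otimes>\<^bsub>poly_ring R\<^esub> v' j)"
          using P.bce_cong[where n=n and x=v and y="\<lambda>j. q \<otimes>\<^bsub>poly_ring R\<^esub> v' j" and hh=poly_of_const and c=c, OF veq pc qv'c] .
        also have "\<dots> = q [^]\<^bsub>poly_ring R\<^esub> (3::nat) \<otimes>\<^bsub>poly_ring R\<^esub> ?Phi v'"
          using P.bce_smult[where n=n and hh=poly_of_const and c=c and x=v', OF q(1) pc v'c] .
        finally have Fq0: "?Phi v = q [^]\<^bsub>poly_ring R\<^esub> (3::nat) \<otimes>\<^bsub>poly_ring R\<^esub> ?Phi v'" .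
        have qq: "q \<otimes>\<^bsub>poly_ring R\<^esub> q \<in> carrier (poly_ring R)" using P.m_closed[OF q(1) q(1)] .
        have Fq: "?Phi v = q \<otimes>\<^bsub>poly_ring R\<^esub> (q \<otimes>\<^bsub>poly_ring R\<^esub> (q \<otimes>\<^bsub>poly_ring R\<^esub> ?Phi v'))"
          unfolding Fq0 q3 using P.m_assoc[OF q(1) qq Phiv'] P.m_assoc[OF q(1) q(1) Phiv'] by simp
        have pnq: "\<not> p pdivides q"
        proof
          assume pq: "p pdivides q"
          have qn: "q \<noteq> []" using dq by auto
          have "degree p \<le> degree q"
            using pdivides_imp_degree_le[OF carrier_is_subring p(1) q(1) qn pq] .
          then show False using qe elt by simp
        qed
        have X1: "q \<otimes>\<^bsub>poly_ring R\<^esub> ?Phi v' \<in> carrier (poly_ring R)" using P.m_closed[OF q(1) Phiv'] .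
        have X2: "q \<otimes>\<^bsub>poly_ring R\<^esub> (q \<otimes>\<^bsub>poly_ring R\<^esub> ?Phi v') \<in> carrier (poly_ring R)" using P.m_closed[OF q(1) X1] .
        have "p pdivides (q \<otimes>\<^bsub>poly_ring R\<^esub> (q \<otimes>\<^bsub>poly_ring R\<^esub> (q \<otimes>\<^bsub>poly_ring R\<^esub> ?Phi v')))"
          using vF unfolding Fq .
        then have "p pdivides (q \<otimes>\<^bsub>poly_ring R\<^esub> (q \<otimes>\<^bsub>poly_ring R\<^esub> ?Phi v'))"
          using pprime_p[OF p q(1) X2] pnq by blast
        then have "p pdivides (q \<otimes>\<^bsub>poly_ring R\<^esub> ?Phi v')"
          using pprime_p[OF p q(1) X1] pnq by blast
        then have pF': "p pdivides ?Phi v'"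
          using pprime_p[OF p q(1) Phiv'] pnq by blast
        have nd': "\<exists>j<n. \<not> p pdivides v' j"
        proof -
          have "\<not> p pdivides v' j0"
          proof
            assume "p pdivides v' j0"
            then have "p pdivides (q \<otimes>\<^bsub>poly_ring R\<^esub> v' j0)"
              using pdiv_multr[OF p(1) _ q(1)] v'[OF j0(1)] by blast
            then show False using j0(2) v'[OF j0(1)] by simp
          qed
          then show ?thesis using j0(1) by blast
        qed
        have "Good (e - degree q)" unfolding Good_def
          using v' v'l nd' pF' by (intro exI[of _ v']) auto
        then have "e \<le> e - degree q" by (rule emin)
        then show False using dq qe by simp
      qed
      then show ?thesis using vc qF by blast
    qed
    show ?thesis
      using G(1) Gne elt degG good by blast
  qed
qed

end


context field
begin

lemma irr_factor:
  "f \<in> carrier (poly_ring R) \<Longrightarrow> degree f \<ge> 1 \<Longrightarrow>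
   \<exists>q\<in>carrier (poly_ring R). pirreducible (carrier R) q \<and> q pdivides f \<and> degree q \<le> degree f"
proof (induction "degree f" arbitrary: f rule: less_induct)
  case less
  interpret P: cring "poly_ring R" using univ_poly_is_cring[OF carrier_is_subring] .
  have fne: "f \<noteq> []" using less.prems(2) by auto
  have fnu: "f \<notin> Units (poly_ring R)"
    using univ_poly_units'[OF carrier_is_subfield, of f] less.prems(2) by auto
  show ?case
  proof (cases "pirreducible (carrier R) f")
    case True
    then show ?thesis using less.prems(1) pdiv_self[OF less.prems(1)] by blast
  next
    case False
    obtain a b where ab: "a \<in> carrier (poly_ring R)" "b \<in> carrier (poly_ring R)"
      "f = a \<otimes>\<^bsub>poly_ring R\<^esub> b" "a \<notin> Units (poly_ring R)" "b \<notin> Units (poly_ring R)"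
    proof -
      have "\<not> (\<forall>q r. q \<in> carrier (poly_ring R) \<longrightarrow> r \<in> carrier (poly_ring R) \<longrightarrow>
                 f = q \<otimes>\<^bsub>poly_ring R\<^esub> r \<longrightarrow> q \<in> Units (poly_ring R) \<or> r \<in> Units (poly_ring R))"
      proof
        assume H: "\<forall>q r. q \<in> carrier (poly_ring R) \<longrightarrow> r \<in> carrier (poly_ring R) \<longrightarrow>
                 f = q \<otimes>\<^bsub>poly_ring R\<^esub> r \<longrightarrow> q \<in> Units (poly_ring R) \<or> r \<in> Units (poly_ring R)"
        have "pirreducible (carrier R) f"
          by (rule pirreducibleI[OF carrier_is_subring less.prems(1) fne fnu]) (use H in blast)
        then show False using False by simp
      qed
      then show ?thesis using that by blast
    qed
    have ane: "a \<noteq> []"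
    proof
      assume "a = []"
      then have "f = []" using ab(3) ab(2) poly_mult_zero(1)[OF poly_carrier_set[OF ab(2)]] by (simp add: univ_poly_mult)
      then show False using fne by simp
    qed
    have bne: "b \<noteq> []" using ab(3) poly_mult_zero_r[OF ab(1)] fne by auto
    have da: "degree a \<ge> 1" using ab(4) ab(1) ane univ_poly_units'[OF carrier_is_subfield] by auto
    have db: "degree b \<ge> 1" using ab(5) ab(2) bne univ_poly_units'[OF carrier_is_subfield] by auto
    have dab: "degree f = degree a + degree b" using poly_mult_deg(2)[OF ab(1,2) ane bne] ab(3) by simp
    then have "degree a < degree f" using db by simp
    then obtain q where q: "q \<in> carrier (poly_ring R)" "pirreducible (carrier R) q" "q pdivides a" "degree q \<le> degree a"
      using less.hyps[OF _ ab(1) da] by blast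
    have "a pdivides f" unfolding pdiv_iff using ab(2,3) by blast
    then have "q pdivides f" using pdiv_trans[OF q(1) q(3)] by blast
    then show ?thesis using q dab by force
  qed
qed

lemma factor_125:
  assumes G: "G \<in> carrier (poly_ring R)" and dG: "degree G = 2 \<or> degree G = 5"
  shows "\<exists>q\<in>carrier (poly_ring R). pirreducible (carrier R) q \<and> q pdivides G \<and>
           (degree q = 1 \<or> degree q = 2 \<or> degree q = 5)"
proof -
  interpret P: cring "poly_ring R" using univ_poly_is_cring[OF carrier_is_subring] .
  have "degree G \<ge> 1" using dG by auto
  then obtain q1 where q1: "q1 \<in> carrier (poly_ring R)" "pirreducible (carrier R) q1" "q1 pdivides G"
     "degree q1 \<le> degree G"
    using irr_factor[OF G] by blast
  have d1: "degree q1 \<ge> 1" using pirreducible_degree[OF carrier_is_subfield q1(1,2)] .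
  show ?thesis
  proof (cases "degree q1 = 1 \<or> degree q1 = 2 \<or> degree q1 = 5")
    case True then show ?thesis using q1 by blast
  next
    case False
    then have dG5: "degree G = 5" and dq1: "degree q1 = 3 \<or> degree q1 = 4" using dG q1(4) d1 by auto
    obtain G1 where G1: "G1 \<in> carrier (poly_ring R)" "G = q1 \<otimes>\<^bsub>poly_ring R\<^esub> G1"
      using q1(3) pdiv_iff by blast
    have Gne: "G \<noteq> []" using dG5 by auto
    have q1ne: "q1 \<noteq> []" using d1 by auto
    have G1ne: "G1 \<noteq> []" using G1 Gne poly_mult_zero_r[OF q1(1)] by auto
    have "degree G = degree q1 + degree G1" using poly_mult_deg(2)[OF q1(1) G1(1) q1ne G1ne] G1(2) by simp
    then have dG1: "degree G1 \<ge> 1" "degree G1 \<le> 2" using dG5 dq1 by auto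
    obtain q2 where q2: "q2 \<in> carrier (poly_ring R)" "pirreducible (carrier R) q2" "q2 pdivides G1"
       "degree q2 \<le> degree G1"
      using irr_factor[OF G1(1) dG1(1)] by blast
    have d2: "degree q2 \<ge> 1" using pirreducible_degree[OF carrier_is_subfield q2(1,2)] .
    have "G1 pdivides G" unfolding pdiv_iff using G1 q1(1) P.m_comm by blast
    then have "q2 pdivides G" using pdiv_trans[OF q2(1) q2(3)] by blast
    moreover have "degree q2 = 1 \<or> degree q2 = 2" using d2 q2(4) dG1 by auto
    ultimately show ?thesis using q2(1,2) by blast
  qed
qed

end


definition rep_of :: "'x set \<Rightarrow> 'x" where "rep_of C = (SOME r. r \<in> C)"

definition transp :: "('x set, 'm) ring_scheme \<Rightarrow> 'x ring" where
 "transp S = \<lparr>carrier = rep_of ` carrier S,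
   Group.monoid.mult = (\<lambda>a b. rep_of (inv_into (carrier S) rep_of a \<otimes>\<^bsub>S\<^esub> inv_into (carrier S) rep_of b)),
   Group.monoid.one = rep_of \<one>\<^bsub>S\<^esub>, Ring.ring.zero = rep_of \<zero>\<^bsub>S\<^esub>,
   Ring.ring.add = (\<lambda>a b. rep_of (inv_into (carrier S) rep_of a \<oplus>\<^bsub>S\<^esub> inv_into (carrier S) rep_of b))\<rparr>"

lemma transp_iso:
  assumes "ring S" and inj: "inj_on rep_of (carrier S)"
  shows "rep_of \<in> ring_iso S (transp S)"
proof -
  interpret ring S by fact
  have inv: "inv_into (carrier S) rep_of (rep_of x) = x" if "x \<in> carrier S" for x
    using inv_into_f_f[OF inj that] .
  have "rep_of \<in> ring_hom S (transp S)"
    by (rule ring_hom_memI) (auto simp: transp_def inv)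
  moreover have "bij_betw rep_of (carrier S) (carrier (transp S))"
    using inj unfolding bij_betw_def transp_def by simp
  ultimately show ?thesis unfolding ring_iso_def by simp
qed

lemma transp_field:
  assumes "field S" and inj: "inj_on rep_of (carrier S)"
  shows "field (transp S)"
proof -
  interpret field S by fact
  have "field (transp S \<lparr> zero := rep_of \<zero>\<^bsub>S\<^esub> \<rparr>)"
    using ring_iso_imp_img_field[OF transp_iso[OF ring_axioms inj]] .
  moreover have "transp S \<lparr> zero := rep_of \<zero>\<^bsub>S\<^esub> \<rparr> = transp S" by (simp add: transp_def)
  ultimately show ?thesis by simp
qed

lemma transp_ring_hom_ring:
  assumes "ring S" and inj: "inj_on rep_of (carrier S)"
  shows "ring_hom_ring S (transp S) rep_of"
proof -
  interpret ring S by fact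
  have iso: "rep_of \<in> ring_iso S (transp S)" using transp_iso[OF assms] .
  have "ring (transp S \<lparr> carrier := rep_of ` carrier S, zero := rep_of \<zero>\<^bsub>S\<^esub> \<rparr>)"
    using ring_hom_imp_img_ring[of rep_of "transp S"] iso unfolding ring_iso_def by auto
  moreover have "transp S \<lparr> carrier := rep_of ` carrier S, zero := rep_of \<zero>\<^bsub>S\<^esub> \<rparr> = transp S" by (simp add: transp_def)
  ultimately have "ring (transp S)" by simp
  then show ?thesis using iso ring_axioms unfolding ring_iso_def
    by (intro ring_hom_ringI2) auto
qed

context field
begin

lemma rupt_inj_rep:
  assumes q: "q \<in> carrier (poly_ring R)"
  shows "inj_on rep_of (carrier (Rupt (carrier R) q))"
proof -
  interpret P: cring "poly_ring R" using univ_poly_is_cring[OF carrier_is_subring] .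
  let ?I = "PIdl\<^bsub>poly_ring R\<^esub> q"
  have I: "ideal ?I (poly_ring R)" using P.cgenideal_ideal[OF q] .
  have sg: "subgroup ?I (add_monoid (poly_ring R))" using additive_subgroup.a_subgroup[OF ideal.axioms(1)[OF I]] .
  have asg: "abelian_subgroup ?I (poly_ring R)" using abelian_subgroupI3[OF ideal.axioms(1)[OF I] P.is_abelian_group] .
  have Isub: "?I \<subseteq> carrier (poly_ring R)" using additive_subgroup.a_subset[OF ideal.axioms(1)[OF I]] .
  have car: "\<exists>a\<in>carrier (poly_ring R). C = ?I +>\<^bsub>poly_ring R\<^esub> a"
    if "C \<in> carrier (Rupt (carrier R) q)" for C
  proof -
    have "C \<in> a_rcosets\<^bsub>poly_ring R\<^esub> ?I" using that unfolding rupture_def FactRing_def by simp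
    then show ?thesis unfolding A_RCOSETS_def' by blast
  qed
  have mem: "rep_of C \<in> C \<and> C = ?I +>\<^bsub>poly_ring R\<^esub> rep_of C \<and> rep_of C \<in> carrier (poly_ring R)"
    if Cc: "C \<in> carrier (Rupt (carrier R) q)" for C
  proof -
    obtain a where a: "a \<in> carrier (poly_ring R)" "C = ?I +>\<^bsub>poly_ring R\<^esub> a" using car[OF Cc] by blast
    have "a \<in> C" using abelian_subgroup.a_rcos_self[OF asg a(1)] a(2) by simp
    then have r: "rep_of C \<in> C" unfolding rep_of_def by (rule someI)
    have rc: "rep_of C \<in> carrier (poly_ring R)"
      using r a(2) P.a_r_coset_subset_G[OF Isub a(1)] by blast
    have "C = ?I +>\<^bsub>poly_ring R\<^esub> rep_of C"
      using P.a_repr_independence[OF _ a(1) sg] r a(2) by simp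
    then show ?thesis using r rc by simp
  qed
  show ?thesis
  proof (rule inj_onI)
    fix C D assume C: "C \<in> carrier (Rupt (carrier R) q)" and D: "D \<in> carrier (Rupt (carrier R) q)"
      and eq: "rep_of C = rep_of D"
    show "C = D" using mem[OF C] mem[OF D] eq by metis
  qed
qed

end


context field
begin

lemma rupt_zero: "\<zero>\<^bsub>Rupt (carrier R) q\<^esub> = PIdl\<^bsub>poly_ring R\<^esub> q"
  by (simp add: rupture_def FactRing_def)

lemma rupt_ker:
  assumes q: "q \<in> carrier (poly_ring R)" and f: "f \<in> carrier (poly_ring R)"
  shows "rupture_surj (carrier R) q f = \<zero>\<^bsub>Rupt (carrier R) q\<^esub> \<longleftrightarrow> q pdivides f"
proof -
  interpret P: cring "poly_ring R" using univ_poly_is_cring[OF carrier_is_subring] .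
  let ?I = "PIdl\<^bsub>poly_ring R\<^esub> q"
  have I: "ideal ?I (poly_ring R)" using P.cgenideal_ideal[OF q] .
  show ?thesis
  proof
    assume "rupture_surj (carrier R) q f = \<zero>\<^bsub>Rupt (carrier R) q\<^esub>"
    then have "?I +>\<^bsub>poly_ring R\<^esub> f = ?I" unfolding rupt_zero .
    then have "f \<in> ?I" using ideal.rcos_const_imp_mem[OF I f] by blast
    then obtain x where x: "x \<in> carrier (poly_ring R)" "f = x \<otimes>\<^bsub>poly_ring R\<^esub> q"
      unfolding cgenideal_def by blast
    then have "f = q \<otimes>\<^bsub>poly_ring R\<^esub> x" using P.m_comm[OF x(1) q] by simp
    then show "q pdivides f" unfolding pdiv_iff using x(1) by blast
  next
    assume "q pdivides f"
    then obtain x where x: "x \<in> carrier (poly_ring R)" "f = q \<otimes>\<^bsub>poly_ring R\<^esub> x"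
      unfolding pdiv_iff by blast
    then have "f = x \<otimes>\<^bsub>poly_ring R\<^esub> q" using P.m_comm[OF x(1) q] by simp
    then have "f \<in> ?I" unfolding cgenideal_def using x(1) by blast
    then show "rupture_surj (carrier R) q f = \<zero>\<^bsub>Rupt (carrier R) q\<^esub>"
      unfolding rupt_zero using P.a_rcos_zero[OF I] by blast
  qed
qed

lemma final:
  assumes c: "\<And>i j l. i<n \<Longrightarrow> j<n \<Longrightarrow> l<n \<Longrightarrow> c i j l \<in> carrier R"
    and q: "q \<in> carrier (poly_ring R)" "pirreducible (carrier R) q"
    and v: "\<And>j. j<n \<Longrightarrow> v j \<in> carrier (poly_ring R)" "\<exists>j<n. \<not> q pdivides v j"
       "q pdivides base_change_eval (poly_ring R) poly_of_const n c v"
  shows "\<exists>(L::'a list ring) hL. field_extension R L hL \<and> ext_degree_eq R L hL (degree q) \<and> isotropic_over L hL n c"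
proof -
  interpret P: cring "poly_ring R" using univ_poly_is_cring[OF carrier_is_subring] .
  let ?S = "Rupt (carrier R) q"
  let ?rs = "rupture_surj (carrier R) q"
  define L where "L = transp ?S"
  have fS: "field ?S" using rupture_is_field_iff_pirreducible[OF carrier_is_subfield q(1)] q(2) by simp
  interpret S: field ?S by (rule fS)
  have inj: "inj_on rep_of (carrier ?S)" using rupt_inj_rep[OF q(1)] .
  have fL: "field L" unfolding L_def using transp_field[OF fS inj] .
  interpret L: field L by (rule fL)
  have rs: "ring_hom_ring (poly_ring R) ?S ?rs" using rupture_surj_hom(2)[OF carrier_is_subring q(1)] .
  have rp: "ring_hom_ring ?S L rep_of" unfolding L_def using transp_ring_hom_ring[OF S.ring_axioms inj] .
  define psi where "psi = rep_of \<circ> ?rs"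
  have psi: "psi \<in> ring_hom (poly_ring R) L"
    unfolding psi_def using ring_hom_trans[OF ring_hom_ring.homh[OF rs] ring_hom_ring.homh[OF rp]] .
  have psic: "ring_hom_cring (poly_ring R) L psi"
    using ring_hom_cringI[OF P.is_cring L.is_cring psi] .
  have poc: "poly_of_const \<in> ring_hom R (poly_ring R)"
    using canonical_embedding_is_hom[OF carrier_is_subring] by simp
  define hL where "hL = psi \<circ> poly_of_const"
  have hL: "hL \<in> ring_hom R L" unfolding hL_def using ring_hom_trans[OF poc psi] .
  have fe: "field_extension R L hL" unfolding field_extension_def using fL hL by simp
  have dq: "degree q > 0" using pirreducible_degree[OF carrier_is_subfield q] by simp
  have dimS: "S.dimension (degree q) (?rs ` poly_of_const ` carrier R) (carrier ?S)"
    using rupture_dimension[OF carrier_is_subfield q(1) dq] .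
  have rspoc: "(?rs \<circ> poly_of_const) \<in> ring_hom R ?S"
    using rupture_surj_norm_is_hom[OF carrier_is_subring q(1)] by simp
  have "subfield ((?rs \<circ> poly_of_const) ` carrier R) ?S"
    using ring_hom_ring.img_is_subfield(2)[OF ring_hom_ringI2[OF ring_axioms S.ring_axioms rspoc]
          carrier_is_subfield S.one_not_zero] .
  then have Ksub: "subfield (?rs ` poly_of_const ` carrier R) ?S" by (simp add: image_comp)
  have "L.dimension (degree q) (rep_of ` ?rs ` poly_of_const ` carrier R) (rep_of ` carrier ?S)"
    using ring_hom_ring.inj_hom_dimension[OF rp Ksub L.one_not_zero inj dimS] .
  moreover have "rep_of ` carrier ?S = carrier L" unfolding L_def transp_def by simp
  moreover have "rep_of ` ?rs ` poly_of_const ` carrier R = hL ` carrier R"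
    unfolding hL_def psi_def by (simp add: image_comp)
  ultimately have dim: "ext_degree_eq R L hL (degree q)" unfolding ext_degree_eq_def by simp
  obtain j0 where j0: "j0 < n" "\<not> q pdivides v j0" using v(2) by blast
  define x where "x = psi \<circ> v"
  have xc: "x i \<in> carrier L" if "i<n" for i
    unfolding x_def using ring_hom_closed[OF psi v(1)[OF that]] by simp
  have rsv: "?rs (v j0) \<noteq> \<zero>\<^bsub>?S\<^esub>" using rupt_ker[OF q(1) v(1)[OF j0(1)]] j0(2) by simp
  have rsvc: "?rs (v j0) \<in> carrier ?S" using ring_hom_closed[OF ring_hom_ring.homh[OF rs] v(1)[OF j0(1)]] .
  have zL: "\<zero>\<^bsub>L\<^esub> = rep_of \<zero>\<^bsub>?S\<^esub>" unfolding L_def transp_def by simp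
  have "x j0 \<noteq> \<zero>\<^bsub>L\<^esub>"
  proof
    assume "x j0 = \<zero>\<^bsub>L\<^esub>"
    then have "rep_of (?rs (v j0)) = rep_of \<zero>\<^bsub>?S\<^esub>" unfolding x_def psi_def zL by simp
    then have "?rs (v j0) = \<zero>\<^bsub>?S\<^esub>" using inj_onD[OF inj _ rsvc S.zero_closed] by blast
    then show False using rsv by simp
  qed
  then have xnz: "\<exists>i<n. x i \<noteq> \<zero>\<^bsub>L\<^esub>" using j0(1) by blast
  have pc: "\<And>i j l. i<n \<Longrightarrow> j<n \<Longrightarrow> l<n \<Longrightarrow> poly_of_const (c i j l) \<in> carrier (poly_ring R)"
    using poly_of_const_props(1) c by blast
  have "psi (base_change_eval (poly_ring R) poly_of_const n c v) = base_change_eval L (psi \<circ> poly_of_const) n c (psi \<circ> v)"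
    using bce_hom[where n=n and hh=poly_of_const and c=c and x=v, OF psic pc v(1)] .
  moreover have "psi (base_change_eval (poly_ring R) poly_of_const n c v) = \<zero>\<^bsub>L\<^esub>"
  proof -
    have Fc: "base_change_eval (poly_ring R) poly_of_const n c v \<in> carrier (poly_ring R)"
      using P.bce_closed[where n=n and hh=poly_of_const and c=c and x=v, OF pc v(1)] .
    have "?rs (base_change_eval (poly_ring R) poly_of_const n c v) = \<zero>\<^bsub>?S\<^esub>"
      using rupt_ker[OF q(1) Fc] v(3) by simp
    then show ?thesis unfolding psi_def zL by simp
  qed
  ultimately have "base_change_eval L hL n c x = \<zero>\<^bsub>L\<^esub>" unfolding hL_def x_def by simp
  then have iso: "isotropic_over L hL n c" unfolding isotropic_over_def using xc xnz by blast
  show ?thesis using fe dim iso by blast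
qed

end


context field
begin

lemma reduce_mod:
  assumes c: "\<And>i j l. i<n \<Longrightarrow> j<n \<Longrightarrow> l<n \<Longrightarrow> c i j l \<in> carrier R"
    and q: "q \<in> carrier (poly_ring R)" "pirreducible (carrier R) q"
    and v: "\<And>j. j<n \<Longrightarrow> v j \<in> carrier (poly_ring R)" "\<exists>j<n. \<not> q pdivides v j"
       "q pdivides base_change_eval (poly_ring R) poly_of_const n c v"
  shows "\<exists>v0. (\<forall>j<n. v0 j \<in> carrier (poly_ring R)) \<and> (\<forall>j<n. length (v0 j) \<le> degree q) \<and>
     (\<exists>j<n. \<not> q pdivides v0 j) \<and> q pdivides base_change_eval (poly_ring R) poly_of_const n c v0"
proof -
  interpret P: cring "poly_ring R" using univ_poly_is_cring[OF carrier_is_subring] .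
  let ?S = "Rupt (carrier R) q"
  let ?rs = "rupture_surj (carrier R) q"
  have fS: "field ?S" using rupture_is_field_iff_pirreducible[OF carrier_is_subfield q(1)] q(2) by simp
  interpret S: field ?S by (rule fS)
  have rs: "ring_hom_ring (poly_ring R) ?S ?rs" using rupture_surj_hom(2)[OF carrier_is_subring q(1)] .
  have rsc: "ring_hom_cring (poly_ring R) ?S ?rs"
    using ring_hom_cringI[OF P.is_cring S.is_cring ring_hom_ring.homh[OF rs]] .
  have qne: "q \<noteq> []" using pirreducible_degree[OF carrier_is_subfield q] by auto
  define v0 where "v0 = (\<lambda>j. v j pmod q)"
  have v0c: "v0 j \<in> carrier (poly_ring R)" if "j<n" for j
    unfolding v0_def using long_division_closed(2)[OF carrier_is_subfield v(1)[OF that] q(1)] .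
  have v0l: "length (v0 j) \<le> degree q" if "j<n" for j
  proof -
    have "v0 j = [] \<or> degree (v0 j) < degree q"
      unfolding v0_def using pmod_degree[OF carrier_is_subfield v(1)[OF that] q(1) qne] .
    then show ?thesis by auto
  qed
  have rseq: "?rs (v0 j) = ?rs (v j)" if "j<n" for j
    unfolding v0_def using rupture_surj_composed_with_pmod[OF carrier_is_subfield q(1) v(1)[OF that]] by simp
  obtain j0 where j0: "j0<n" "\<not> q pdivides v j0" using v(2) by blast
  have "\<not> q pdivides v0 j0"
    using rupt_ker[OF q(1) v0c[OF j0(1)]] rupt_ker[OF q(1) v(1)[OF j0(1)]] rseq[OF j0(1)] j0(2) by simp
  then have nd: "\<exists>j<n. \<not> q pdivides v0 j" using j0(1) by blast
  have pc: "\<And>i j l. i<n \<Longrightarrow> j<n \<Longrightarrow> l<n \<Longrightarrow> poly_of_const (c i j l) \<in> carrier (poly_ring R)"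
    using poly_of_const_props(1) c by blast
  have Fc0: "base_change_eval (poly_ring R) poly_of_const n c v0 \<in> carrier (poly_ring R)"
    using P.bce_closed[where n=n and hh=poly_of_const and c=c and x=v0, OF pc v0c] .
  have Fc: "base_change_eval (poly_ring R) poly_of_const n c v \<in> carrier (poly_ring R)"
    using P.bce_closed[where n=n and hh=poly_of_const and c=c and x=v, OF pc v(1)] .
  have h0: "?rs (base_change_eval (poly_ring R) poly_of_const n c v0) =
     base_change_eval ?S (?rs \<circ> poly_of_const) n c (?rs \<circ> v0)"
    using bce_hom[where n=n and hh=poly_of_const and c=c and x=v0, OF rsc pc v0c] .
  have h1: "?rs (base_change_eval (poly_ring R) poly_of_const n c v) =
     base_change_eval ?S (?rs \<circ> poly_of_const) n c (?rs \<circ> v)"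
    using bce_hom[where n=n and hh=poly_of_const and c=c and x=v, OF rsc pc v(1)] .
  have pcS: "(?rs \<circ> poly_of_const) (c i j l) \<in> carrier ?S" if "i<n" "j<n" "l<n" for i j l
    using ring_hom_closed[OF ring_hom_ring.homh[OF rs] pc[OF that]] by simp
  have vS: "(?rs \<circ> v) j \<in> carrier ?S" if "j<n" for j
    using ring_hom_closed[OF ring_hom_ring.homh[OF rs] v(1)[OF that]] by simp
  have eqv: "(?rs \<circ> v0) j = (?rs \<circ> v) j" if "j<n" for j using rseq[OF that] by simp
  have "base_change_eval ?S (?rs \<circ> poly_of_const) n c (?rs \<circ> v0) =
        base_change_eval ?S (?rs \<circ> poly_of_const) n c (?rs \<circ> v)"
    using S.bce_cong[where n=n and x="?rs \<circ> v0" and y="?rs \<circ> v" and hh="?rs \<circ> poly_of_const" and c=c, OF eqv pcS vS] .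
  then have "?rs (base_change_eval (poly_ring R) poly_of_const n c v0) =
     ?rs (base_change_eval (poly_ring R) poly_of_const n c v)" using h0 h1 by simp
  also have "\<dots> = \<zero>\<^bsub>?S\<^esub>" using rupt_ker[OF q(1) Fc] v(3) by simp
  finally have "q pdivides base_change_eval (poly_ring R) poly_of_const n c v0"
    using rupt_ker[OF q(1) Fc0] by simp
  then show ?thesis using v0c v0l nd by blast
qed

lemma var_facts:
  shows "[\<one>, \<zero>] \<in> carrier (poly_ring R)" "degree [\<one>, \<zero>] = 1"
    "pirreducible (carrier R) [\<one>, \<zero>]"
proof -
  show c: "[\<one>, \<zero>] \<in> carrier (poly_ring R)"
    using var_closed(1)[OF carrier_is_subring] unfolding var_def .
  show d: "degree [\<one>, \<zero>] = 1" by simp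
  show "pirreducible (carrier R) [\<one>, \<zero>]"
    using degree_one_imp_pirreducible[OF carrier_is_subfield c d] .
qed

lemma kiso_good:
  assumes c: "\<And>i j l. i<n \<Longrightarrow> j<n \<Longrightarrow> l<n \<Longrightarrow> c i j l \<in> carrier R"
    and w: "\<forall>i<n. w i \<in> carrier R" "\<exists>i<n. w i \<noteq> \<zero>" "base_change_eval R (\<lambda>x. x) n c w = \<zero>"
  shows "\<exists>v. (\<forall>j<n. v j \<in> carrier (poly_ring R)) \<and> (\<exists>j<n. \<not> [\<one>, \<zero>] pdivides v j) \<and>
              [\<one>, \<zero>] pdivides base_change_eval (poly_ring R) poly_of_const n c v"
proof -
  interpret P: cring "poly_ring R" using univ_poly_is_cring[OF carrier_is_subring] .
  have poc: "poly_of_const \<in> ring_hom R (poly_ring R)"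
    using canonical_embedding_is_hom[OF carrier_is_subring] by simp
  have pocc: "ring_hom_cring R (poly_ring R) poly_of_const"
    using ring_hom_cringI[OF is_cring P.is_cring poc] .
  define v where "v = (\<lambda>j. poly_of_const (w j))"
  have vc: "v j \<in> carrier (poly_ring R)" if "j<n" for j
    unfolding v_def using poly_of_const_props(1) w(1) that by blast
  obtain j0 where j0: "j0<n" "w j0 \<noteq> \<zero>" using w(2) by blast
  have "\<not> [\<one>, \<zero>] pdivides v j0"
  proof
    assume H: "[\<one>, \<zero>] pdivides v j0"
    have vj: "v j0 = [w j0]" unfolding v_def poly_of_const_def using j0(2) by simp
    have "v j0 \<noteq> []" using vj by simp
    then have "degree [\<one>, \<zero>] \<le> degree (v j0)"
      using pdivides_imp_degree_le[OF carrier_is_subring var_facts(1) vc[OF j0(1)]] H by blast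
    then show False using vj by simp
  qed
  then have nd: "\<exists>j<n. \<not> [\<one>, \<zero>] pdivides v j" using j0(1) by blast
  have cc: "(\<lambda>x. x) (c i j l) \<in> carrier R" if "i<n" "j<n" "l<n" for i j l using c[OF that] by simp
  have wc: "w i \<in> carrier R" if "i<n" for i using w(1) that by simp
  have "poly_of_const (base_change_eval R (\<lambda>x. x) n c w) =
        base_change_eval (poly_ring R) (poly_of_const \<circ> (\<lambda>x. x)) n c (poly_of_const \<circ> w)"
    using bce_hom[where n=n and hh="\<lambda>x. x" and c=c and x=w, OF pocc cc wc] .
  moreover have "poly_of_const \<circ> (\<lambda>x. x) = poly_of_const" by (simp add: o_def)
  moreover have "poly_of_const \<circ> w = v" unfolding v_def by (simp add: o_def)
  moreover have "poly_of_const (base_change_eval R (\<lambda>x. x) n c w) = []"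
    unfolding w(3) poly_of_const_def by simp
  ultimately have "base_change_eval (poly_ring R) poly_of_const n c v = []" by simp
  then have "[\<one>, \<zero>] pdivides base_change_eval (poly_ring R) poly_of_const n c v"
    using pdivides_zero[OF carrier_is_subring var_facts(1)] by simp
  then show ?thesis using vc nd by blast
qed

end


context field
begin

lemma main_poly:
  assumes c: "\<And>i j l. i<n \<Longrightarrow> j<n \<Longrightarrow> l<n \<Longrightarrow> c i j l \<in> carrier R"
    and p: "p \<in> carrier (poly_ring R)" "pirreducible (carrier R) p" "degree p = 4"
    and v0: "\<And>j. j<n \<Longrightarrow> v0 j \<in> carrier (poly_ring R)" "\<And>j. j<n \<Longrightarrow> length (v0 j) \<le> degree p"
      "\<exists>j<n. \<not> p pdivides v0 j" "p pdivides base_change_eval (poly_ring R) poly_of_const n c v0"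
  shows "\<exists>(L::'a list ring) hL d. field_extension R L hL \<and> d \<in> {1, 5} \<and> ext_degree_eq R L hL d \<and>
           isotropic_over L hL n c"
proof -
  have fin: "\<exists>(L::'a list ring) hL d. field_extension R L hL \<and> d \<in> {1, 5} \<and> ext_degree_eq R L hL d \<and>
           isotropic_over L hL n c"
    if q: "q \<in> carrier (poly_ring R)" "pirreducible (carrier R) q" "degree q = 1 \<or> degree q = 5"
    and v: "\<And>j. j<n \<Longrightarrow> v j \<in> carrier (poly_ring R)" "\<exists>j<n. \<not> q pdivides v j"
       "q pdivides base_change_eval (poly_ring R) poly_of_const n c v" for q v
  proof -
    obtain L :: "'a list ring" and hL where "field_extension R L hL \<and> ext_degree_eq R L hL (degree q) \<and> isotropic_over L hL n c"
      using final[OF c q(1,2) v] by blast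
    moreover have "degree q \<in> {1, 5}" using q(3) by simp
    ultimately show ?thesis by blast
  qed
  have kfin: "\<exists>(L::'a list ring) hL d. field_extension R L hL \<and> d \<in> {1, 5} \<and> ext_degree_eq R L hL d \<and>
           isotropic_over L hL n c"
    if wex: "\<exists>w. (\<forall>i<n. w i \<in> carrier R) \<and> (\<exists>i<n. w i \<noteq> \<zero>) \<and> base_change_eval R (\<lambda>x. x) n c w = \<zero>"
  proof -
    obtain w where w: "\<forall>i<n. w i \<in> carrier R" "\<exists>i<n. w i \<noteq> \<zero>" "base_change_eval R (\<lambda>x. x) n c w = \<zero>"
      using wex by blast
    obtain v where v: "\<forall>j<n. v j \<in> carrier (poly_ring R)" "\<exists>j<n. \<not> [\<one>, \<zero>] pdivides v j"
       "[\<one>, \<zero>] pdivides base_change_eval (poly_ring R) poly_of_const n c v"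
      using kiso_good[OF c w] by blast
    have vc: "\<And>j. j<n \<Longrightarrow> v j \<in> carrier (poly_ring R)" using v(1) by blast
    have d1: "degree [\<one>, \<zero>] = 1 \<or> degree [\<one>, \<zero>] = 5" using var_facts(2) by simp
    show ?thesis using fin[OF var_facts(1) var_facts(3) d1 vc v(2,3)] .
  qed
  from core[OF c p(1,2) v0] show ?thesis
  proof
    assume "\<exists>w. (\<forall>i<n. w i \<in> carrier R) \<and> (\<exists>i<n. w i \<noteq> \<zero>) \<and> base_change_eval R (\<lambda>x. x) n c w = \<zero>"
    then show ?thesis by (rule kfin)
  next
    assume "\<exists>G\<in>carrier (poly_ring R). G \<noteq> [] \<and> (\<exists>e<degree p. degree G + degree p = 3*e) \<and>
      (\<forall>q\<in>carrier (poly_ring R). pirreducible (carrier R) q \<longrightarrow> q pdivides G \<longrightarrow>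
         (\<exists>v. (\<forall>j<n. v j \<in> carrier (poly_ring R)) \<and> (\<exists>j<n. \<not> q pdivides v j) \<and>
              q pdivides base_change_eval (poly_ring R) poly_of_const n c v))"
    then obtain G e where G: "G \<in> carrier (poly_ring R)" "G \<noteq> []" "e < degree p" "degree G + degree p = 3*e"
      and Gq: "\<And>q. q\<in>carrier (poly_ring R) \<Longrightarrow> pirreducible (carrier R) q \<Longrightarrow> q pdivides G \<Longrightarrow>
         (\<exists>v. (\<forall>j<n. v j \<in> carrier (poly_ring R)) \<and> (\<exists>j<n. \<not> q pdivides v j) \<and>
              q pdivides base_change_eval (poly_ring R) poly_of_const n c v)"
      by blast
    have "degree G = 2 \<or> degree G = 5" using G(3,4) p(3) by (cases e) (auto, presburger)
    then obtain q where q: "q \<in> carrier (poly_ring R)" "pirreducible (carrier R) q" "q pdivides G"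
      "degree q = 1 \<or> degree q = 2 \<or> degree q = 5"
      using factor_125[OF G(1)] by blast
    obtain v where v: "\<forall>j<n. v j \<in> carrier (poly_ring R)" "\<exists>j<n. \<not> q pdivides v j"
       "q pdivides base_change_eval (poly_ring R) poly_of_const n c v"
      using Gq[OF q(1-3)] by blast
    have vc: "\<And>j. j<n \<Longrightarrow> v j \<in> carrier (poly_ring R)" using v(1) by blast
    show ?thesis
    proof (cases "degree q = 2")
      case False
      then have d15: "degree q = 1 \<or> degree q = 5" using q(4) by simp
      show ?thesis using fin[OF q(1,2) d15 vc v(2,3)] .
    next
      case True
      obtain u where u: "\<forall>j<n. u j \<in> carrier (poly_ring R)" "\<forall>j<n. length (u j) \<le> degree q"
        "\<exists>j<n. \<not> q pdivides u j" "q pdivides base_change_eval (poly_ring R) poly_of_const n c u"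
        using reduce_mod[OF c q(1,2) vc v(2,3)] by blast
      have uc: "\<And>j. j<n \<Longrightarrow> u j \<in> carrier (poly_ring R)" using u(1) by blast
      have ul: "\<And>j. j<n \<Longrightarrow> length (u j) \<le> degree q" using u(2) by blast
      from core[OF c q(1,2) uc ul u(3,4)] show ?thesis
      proof
        assume "\<exists>w. (\<forall>i<n. w i \<in> carrier R) \<and> (\<exists>i<n. w i \<noteq> \<zero>) \<and> base_change_eval R (\<lambda>x. x) n c w = \<zero>"
        then show ?thesis by (rule kfin)
      next
        assume "\<exists>G\<in>carrier (poly_ring R). G \<noteq> [] \<and> (\<exists>e<degree q. degree G + degree q = 3*e) \<and>
          (\<forall>q'\<in>carrier (poly_ring R). pirreducible (carrier R) q' \<longrightarrow> q' pdivides G \<longrightarrow>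
             (\<exists>v. (\<forall>j<n. v j \<in> carrier (poly_ring R)) \<and> (\<exists>j<n. \<not> q' pdivides v j) \<and>
                  q' pdivides base_change_eval (poly_ring R) poly_of_const n c v))"
        then obtain G' e' where G': "G' \<in> carrier (poly_ring R)" "G' \<noteq> []" "e' < degree q" "degree G' + degree q = 3*e'"
          and Gq': "\<And>q'. q'\<in>carrier (poly_ring R) \<Longrightarrow> pirreducible (carrier R) q' \<Longrightarrow> q' pdivides G' \<Longrightarrow>
             (\<exists>v. (\<forall>j<n. v j \<in> carrier (poly_ring R)) \<and> (\<exists>j<n. \<not> q' pdivides v j) \<and>
                  q' pdivides base_change_eval (poly_ring R) poly_of_const n c v)"
          by blast
        have dG': "degree G' = 1" using G'(3,4) True by (cases e') auto
        have irr: "pirreducible (carrier R) G'" using degree_one_imp_pirreducible[OF carrier_is_subfield G'(1) dG'] .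
        obtain v' where v': "\<forall>j<n. v' j \<in> carrier (poly_ring R)" "\<exists>j<n. \<not> G' pdivides v' j"
           "G' pdivides base_change_eval (poly_ring R) poly_of_const n c v'"
          using Gq'[OF G'(1) irr pdiv_self[OF G'(1)]] by blast
        have v'c: "\<And>j. j<n \<Longrightarrow> v' j \<in> carrier (poly_ring R)" using v'(1) by blast
        have d15: "degree G' = 1 \<or> degree G' = 5" using dG' by simp
        show ?thesis using fin[OF G'(1) irr d15 v'c v'(2,3)] .
      qed
    qed
  qed
qed

end


lemma (in ring) bce_cong2:
  assumes "\<And>i j l. i<n \<Longrightarrow> j<n \<Longrightarrow> l<n \<Longrightarrow> hh (c i j l) = hh' (c i j l)"
    and "\<And>j. j<n \<Longrightarrow> x j = y j"
    and "\<And>i j l. i<n \<Longrightarrow> j<n \<Longrightarrow> l<n \<Longrightarrow> hh' (c i j l) \<in> carrier R"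
    and "\<And>i. i<n \<Longrightarrow> y i \<in> carrier R"
  shows "base_change_eval R hh n c x = base_change_eval R hh' n c y"
  unfolding base_change_eval_def using assms
  by (auto intro!: finsum_cong' finsum_closed)

context field
begin

lemma psi_hom:
  assumes fK: "field K" and h: "hK \<in> ring_hom R K" and a: "\<alpha> \<in> carrier K"
  shows "(\<lambda>f. ring.eval K (map hK f) \<alpha>) \<in> ring_hom (poly_ring R) K"
proof -
  interpret K: field K by (rule fK)
  interpret H: ring_hom_ring R K hK using ring_hom_ringI2[OF ring_axioms K.ring_axioms h] .
  have sm: "set (map hK f) \<subseteq> carrier K" if "f \<in> carrier (poly_ring R)" for f
    using poly_carrier_set[OF that] by auto
  show ?thesis
  proof (rule ring_hom_memI)
    fix f assume f: "f \<in> carrier (poly_ring R)"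
    show "K.eval (map hK f) \<alpha> \<in> carrier K" using K.eval_in_carrier[OF sm[OF f] a] .
  next
    fix f g assume f: "f \<in> carrier (poly_ring R)" and g: "g \<in> carrier (poly_ring R)"
    have sf: "set f \<subseteq> carrier R" and sg: "set g \<subseteq> carrier R" using poly_carrier_set f g by auto
    have "K.eval (map hK (f \<otimes>\<^bsub>poly_ring R\<^esub> g)) \<alpha> = K.eval (map hK (poly_mult f g)) \<alpha>"
      by (simp add: univ_poly_mult)
    also have "\<dots> = K.eval (K.normalize (map hK (poly_mult f g))) \<alpha>"
    proof -
      have "set (map hK (poly_mult f g)) \<subseteq> carrier K"
        using poly_mult_in_carrier[OF sf sg] ring_hom_closed[OF h] by auto
      then show ?thesis using K.eval_normalize[OF _ a] by simp
    qed
    also have "\<dots> = K.eval (K.poly_mult (map hK f) (map hK g)) \<alpha>"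
      using H.poly_mult_hom'[OF sf sg] by simp
    also have "\<dots> = K.eval (map hK f) \<alpha> \<otimes>\<^bsub>K\<^esub> K.eval (map hK g) \<alpha>"
      using K.eval_poly_mult[OF sm[OF f] sm[OF g] a] .
    finally show "K.eval (map hK (f \<otimes>\<^bsub>poly_ring R\<^esub> g)) \<alpha> = K.eval (map hK f) \<alpha> \<otimes>\<^bsub>K\<^esub> K.eval (map hK g) \<alpha>" .
  next
    fix f g assume f: "f \<in> carrier (poly_ring R)" and g: "g \<in> carrier (poly_ring R)"
    have sf: "set f \<subseteq> carrier R" and sg: "set g \<subseteq> carrier R" using poly_carrier_set f g by auto
    have "K.eval (map hK (f \<oplus>\<^bsub>poly_ring R\<^esub> g)) \<alpha> = K.eval (map hK (poly_add f g)) \<alpha>"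
      by (simp add: univ_poly_add)
    also have "\<dots> = K.eval (K.normalize (map hK (poly_add f g))) \<alpha>"
    proof -
      have "set (map hK (poly_add f g)) \<subseteq> carrier K"
        using poly_add_in_carrier[OF sf sg] ring_hom_closed[OF h] by auto
      then show ?thesis using K.eval_normalize[OF _ a] by simp
    qed
    also have "\<dots> = K.eval (K.poly_add (map hK f) (map hK g)) \<alpha>"
      using H.poly_add_hom'[OF sf sg] by simp
    also have "\<dots> = K.eval (map hK f) \<alpha> \<oplus>\<^bsub>K\<^esub> K.eval (map hK g) \<alpha>"
      using K.eval_poly_add[OF sm[OF f] sm[OF g] a] .
    finally show "K.eval (map hK (f \<oplus>\<^bsub>poly_ring R\<^esub> g)) \<alpha> = K.eval (map hK f) \<alpha> \<oplus>\<^bsub>K\<^esub> K.eval (map hK g) \<alpha>" .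
  next
    show "K.eval (map hK \<one>\<^bsub>poly_ring R\<^esub>) \<alpha> = \<one>\<^bsub>K\<^esub>" using a by (simp add: univ_poly_one)
  qed
qed

lemma psi_const:
  assumes fK: "field K" and h: "hK \<in> ring_hom R K" and a: "\<alpha> \<in> carrier K" and x: "x \<in> carrier R"
  shows "ring.eval K (map hK (poly_of_const x)) \<alpha> = hK x"
proof -
  interpret K: field K by (rule fK)
  interpret H: ring_hom_ring R K hK using ring_hom_ringI2[OF ring_axioms K.ring_axioms h] .
  show ?thesis using x a unfolding poly_of_const_def by auto
qed

lemma pullback:
  assumes fK: "field K" and h: "hK \<in> ring_hom R K" and P': "P' \<in> carrier (univ_poly K (hK ` carrier R))"
  shows "\<exists>f\<in>carrier (poly_ring R). map hK f = P'"
proof -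
  interpret K: field K by (rule fK)
  interpret H: ring_hom_ring R K hK using ring_hom_ringI2[OF ring_axioms K.ring_axioms h] .
  let ?g = "inv_into (carrier R) hK"
  define f where "f = map ?g P'"
  have pol: "polynomial\<^bsub>K\<^esub> (hK ` carrier R) P'" using P' unfolding univ_poly_carrier[symmetric] .
  have sP: "set P' \<subseteq> hK ` carrier R" using K.polynomial_incl[OF pol] .
  have mf: "map hK f = P'" unfolding f_def using sP by (induct P') (auto simp: f_inv_into_f)
  have sf: "set f \<subseteq> carrier R" unfolding f_def using sP by (auto intro: inv_into_into)
  have "polynomial (carrier R) f"
  proof (cases f)
    case Nil then show ?thesis by (simp add: polynomial_def)
  next
    case (Cons a f')
    then obtain b P'' where Pc: "P' = b # P''" unfolding f_def by (cases P') auto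
    have b0: "b \<noteq> \<zero>\<^bsub>K\<^esub>" using pol Pc unfolding polynomial_def by simp
    have "a = ?g b" using Cons Pc unfolding f_def by simp
    moreover have "hK (?g b) = b" using sP Pc by (auto simp: f_inv_into_f)
    ultimately have "a \<noteq> \<zero>" using b0 by auto
    then show ?thesis using sf Cons unfolding polynomial_def by simp
  qed
  then have "f \<in> carrier (poly_ring R)" unfolding univ_poly_carrier .
  then show ?thesis using mf by blast
qed

end


context field
begin

lemma K_side:
  assumes c: "\<And>i j l. i<n \<Longrightarrow> j<n \<Longrightarrow> l<n \<Longrightarrow> c i j l \<in> carrier R"
    and fK: "field K" and h: "hK \<in> ring_hom R K" and a: "\<alpha> \<in> carrier K"
    and gen: "carrier K = generate_field K (insert \<alpha> (hK ` carrier R))"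
    and dim: "ring.dimension K 4 (hK ` carrier R) (carrier K)"
    and iso: "isotropic_over K hK n c"
  shows "\<exists>p\<in>carrier (poly_ring R). pirreducible (carrier R) p \<and> degree p = 4 \<and>
     (\<exists>v0. (\<forall>j<n. v0 j \<in> carrier (poly_ring R)) \<and> (\<forall>j<n. length (v0 j) \<le> degree p) \<and>
       (\<exists>j<n. \<not> p pdivides v0 j) \<and> p pdivides base_change_eval (poly_ring R) poly_of_const n c v0)"
proof -
  interpret K: field K by (rule fK)
  interpret H: ring_hom_ring R K hK using ring_hom_ringI2[OF ring_axioms K.ring_axioms h] .
  interpret P: principal_domain "poly_ring R" using univ_poly_is_principal[OF carrier_is_subfield] .
  define F where "F = hK ` carrier R"
  have subF: "subfield F K" unfolding F_def using H.img_is_subfield(2)[OF carrier_is_subfield K.one_not_zero] .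
  have Fc: "F \<subseteq> carrier K" using subfieldE(3)[OF subF] .
  have subrF: "subring F K" using subfieldE(1)[OF subF] .
  define psi where "psi = (\<lambda>f. K.eval (map hK f) \<alpha>)"
  have psi: "psi \<in> ring_hom (poly_ring R) K" unfolding psi_def using psi_hom[OF fK h a] .
  interpret Psi: ring_hom_ring "poly_ring R" K psi using ring_hom_ringI2[OF P.ring_axioms K.ring_axioms psi] .
  have psic: "ring_hom_cring (poly_ring R) K psi" using ring_hom_cringI[OF P.is_cring K.is_cring psi] .
  have psiconst: "psi (poly_of_const x) = hK x" if "x \<in> carrier R" for x
    unfolding psi_def using psi_const[OF fK h a that] .
  have alg: "(K.algebraic over F) \<alpha>"
    using K.finite_dimension_imp_algebraic[OF subF K.carrier_is_subring K.finite_dimensionI[OF dim[folded F_def]] a] .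
  have surj: "\<exists>f\<in>carrier (poly_ring R). psi f = y" if y: "y \<in> carrier K" for y
  proof -
    have sfe: "subfield (K.simple_extension F \<alpha>) K" using K.simple_extension_is_subfield[OF subF a] alg by simp
    have incl: "insert \<alpha> F \<subseteq> K.simple_extension F \<alpha>"
      using K.simple_extension_incl[OF Fc a] K.simple_extension_mem[OF subrF a] by blast
    have "generate_field K (insert \<alpha> F) \<subseteq> K.simple_extension F \<alpha>"
      using K.generate_field_min_subfield1[OF _ sfe incl] Fc a by blast
    then have "y \<in> (\<lambda>p. K.eval p \<alpha>) ` carrier (univ_poly K F)"
      using y gen K.simple_extension_as_eval_img[OF Fc a] unfolding F_def by blast
    then obtain P' where P': "P' \<in> carrier (univ_poly K F)" "y = K.eval P' \<alpha>" by blast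
    obtain f where f: "f \<in> carrier (poly_ring R)" "map hK f = P'" using pullback[OF fK h P'(1)[unfolded F_def]] by blast
    show ?thesis using f P' unfolding psi_def by blast
  qed
  obtain P' where P': "P' \<in> carrier (univ_poly K F)" "P' \<noteq> []" "K.eval P' \<alpha> = \<zero>\<^bsub>K\<^esub>"
    using K.algebraicE[OF subrF a alg] by blast
  obtain f0 where f0: "f0 \<in> carrier (poly_ring R)" "map hK f0 = P'" using pullback[OF fK h P'(1)[unfolded F_def]] by blast
  have f0ne: "f0 \<noteq> []" using f0(2) P'(2) by auto
  have f0k: "psi f0 = \<zero>\<^bsub>K\<^esub>" unfolding psi_def using f0(2) P'(3) by simp
  let ?I = "a_kernel (poly_ring R) K psi"
  have I: "ideal ?I (poly_ring R)" using Psi.kernel_is_ideal .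
  obtain p where p: "p \<in> carrier (poly_ring R)" "?I = PIdl\<^bsub>poly_ring R\<^esub> p" using P.exists_gen[OF I] by blast
  have kerI: "psi f = \<zero>\<^bsub>K\<^esub> \<longleftrightarrow> p pdivides f" if f: "f \<in> carrier (poly_ring R)" for f
  proof -
    have "psi f = \<zero>\<^bsub>K\<^esub> \<longleftrightarrow> f \<in> ?I" unfolding a_kernel_def' using f by simp
    also have "\<dots> \<longleftrightarrow> f \<in> PIdl\<^bsub>poly_ring R\<^esub> p" using p(2) by simp
    also have "\<dots> \<longleftrightarrow> p pdivides f"
    proof
      assume "f \<in> PIdl\<^bsub>poly_ring R\<^esub> p"
      then obtain x where x: "x \<in> carrier (poly_ring R)" "f = x \<otimes>\<^bsub>poly_ring R\<^esub> p"
        unfolding cgenideal_def by blast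
      then have "f = p \<otimes>\<^bsub>poly_ring R\<^esub> x" using P.m_comm[OF x(1) p(1)] by simp
      then show "p pdivides f" unfolding pdiv_iff using x(1) by blast
    next
      assume "p pdivides f"
      then obtain x where x: "x \<in> carrier (poly_ring R)" "f = p \<otimes>\<^bsub>poly_ring R\<^esub> x"
        unfolding pdiv_iff by blast
      then have "f = x \<otimes>\<^bsub>poly_ring R\<^esub> p" using P.m_comm[OF x(1) p(1)] by simp
      then show "f \<in> PIdl\<^bsub>poly_ring R\<^esub> p" unfolding cgenideal_def using x(1) by blast
    qed
    finally show ?thesis .
  qed
  have pne: "p \<noteq> []"
  proof
    assume "p = []"
    then have "p pdivides f0" using kerI[OF f0(1)] f0k by simp
    then show False using \<open>p = []\<close> zero_pdivides f0ne by simp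
  qed
  have "primeideal {r \<in> carrier (poly_ring R). psi r \<in> {\<zero>\<^bsub>K\<^esub>}} (poly_ring R)"
    using Psi.primeideal_vimage[OF P.is_cring K.zeroprimeideal] .
  moreover have "{r \<in> carrier (poly_ring R). psi r \<in> {\<zero>\<^bsub>K\<^esub>}} = PIdl\<^bsub>poly_ring R\<^esub> p"
    using p(2) unfolding a_kernel_def' by auto
  ultimately have "primeideal (PIdl\<^bsub>poly_ring R\<^esub> p) (poly_ring R)" by simp
  then have "ring_prime\<^bsub>poly_ring R\<^esub> p" using P.primeideal_iff_prime[of p] p(1) pne by (simp add: univ_poly_zero)
  then have pirr: "pirreducible (carrier R) p" using pprime_iff_pirreducible[OF carrier_is_subfield p(1)] by simp
  have pk: "psi p = \<zero>\<^bsub>K\<^esub>" using kerI[OF p(1)] pdiv_self[OF p(1)] by simp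
  have dp: "degree p = 4"
  proof -
    let ?S = "Rupt (carrier R) p"
    let ?rs = "rupture_surj (carrier R) p"
    define th where "th = (\<lambda>C. the_elem (psi ` C))"
    have imgK: "psi ` carrier (poly_ring R) = carrier K"
      using ring_hom_closed[OF psi] surj by blast
    have "th \<in> ring_iso (poly_ring R Quot ?I) (K \<lparr> carrier := psi ` carrier (poly_ring R) \<rparr>)"
      unfolding th_def using Psi.FactRing_iso_set_aux .
    moreover have "poly_ring R Quot ?I = ?S" unfolding rupture_def p(2) ..
    moreover have "K \<lparr> carrier := psi ` carrier (poly_ring R) \<rparr> = K" unfolding imgK by simp
    ultimately have thiso: "th \<in> ring_iso ?S K" by simp
    have fS: "field ?S" using rupture_is_field_iff_pirreducible[OF carrier_is_subfield p(1)] pirr by simp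
    interpret S: field ?S by (rule fS)
    have thhom: "ring_hom_ring ?S K th"
      using ring_hom_ringI2[OF S.ring_axioms K.ring_axioms] thiso unfolding ring_iso_def by blast
    have bij: "bij_betw th (carrier ?S) (carrier K)" using thiso unfolding ring_iso_def by blast
    have inj: "inj_on th (carrier ?S)" using bij unfolding bij_betw_def by blast
    have thS: "th ` carrier ?S = carrier K" using bij unfolding bij_betw_def by blast
    have dq: "degree p > 0" using pirreducible_degree[OF carrier_is_subfield p(1) pirr] by simp
    have dimS: "S.dimension (degree p) (?rs ` poly_of_const ` carrier R) (carrier ?S)"
      using rupture_dimension[OF carrier_is_subfield p(1) dq] .
    have rspoc: "(?rs \<circ> poly_of_const) \<in> ring_hom R ?S"
      using rupture_surj_norm_is_hom[OF carrier_is_subring p(1)] by simp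
    have "subfield ((?rs \<circ> poly_of_const) ` carrier R) ?S"
      using ring_hom_ring.img_is_subfield(2)[OF ring_hom_ringI2[OF ring_axioms S.ring_axioms rspoc]
            carrier_is_subfield S.one_not_zero] .
    then have Ksub: "subfield (?rs ` poly_of_const ` carrier R) ?S" by (simp add: image_comp)
    have d1: "K.dimension (degree p) (th ` ?rs ` poly_of_const ` carrier R) (th ` carrier ?S)"
      using ring_hom_ring.inj_hom_dimension[OF thhom Ksub K.one_not_zero inj dimS] .
    have "th (?rs (poly_of_const a)) = hK a" if "a \<in> carrier R" for a
    proof -
      have pa: "poly_of_const a \<in> carrier (poly_ring R)" using poly_of_const_props(1)[OF that] .
      have "th (?rs (poly_of_const a)) = the_elem (psi ` (?I +>\<^bsub>poly_ring R\<^esub> poly_of_const a))"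
        unfolding th_def p(2) ..
      also have "\<dots> = psi (poly_of_const a)" using Psi.the_elem_simp[OF pa] .
      also have "\<dots> = hK a" using psiconst[OF that] .
      finally show ?thesis .
    qed
    then have "th ` ?rs ` poly_of_const ` carrier R = F" unfolding F_def by (force simp: image_comp)
    then have d2: "K.dimension (degree p) F (carrier K)" using d1 thS by simp
    show ?thesis using K.dimension_is_inj[OF subF d2 dim[folded F_def]] .
  qed
  obtain x where x: "\<forall>i<n. x i \<in> carrier K" "\<exists>i<n. x i \<noteq> \<zero>\<^bsub>K\<^esub>" "base_change_eval K hK n c x = \<zero>\<^bsub>K\<^esub>"
    using iso unfolding isotropic_over_def by blast
  define fx where "fx = (\<lambda>j. SOME f. f \<in> carrier (poly_ring R) \<and> psi f = x j)"
  have fx: "fx j \<in> carrier (poly_ring R) \<and> psi (fx j) = x j" if "j<n" for j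
  proof -
    have "\<exists>f. f \<in> carrier (poly_ring R) \<and> psi f = x j" using surj x(1) that by blast
    then show ?thesis unfolding fx_def by (rule someI_ex)
  qed
  define v0 where "v0 = (\<lambda>j. fx j pmod p)"
  have v0c: "v0 j \<in> carrier (poly_ring R)" if "j<n" for j
    unfolding v0_def using long_division_closed(2)[OF carrier_is_subfield conjunct1[OF fx[OF that]] p(1)] .
  have v0l: "length (v0 j) \<le> degree p" if "j<n" for j
  proof -
    have "v0 j = [] \<or> degree (v0 j) < degree p"
      unfolding v0_def using pmod_degree[OF carrier_is_subfield conjunct1[OF fx[OF that]] p(1) pne] .
    then show ?thesis by auto
  qed
  have psiv0: "psi (v0 j) = x j" if "j<n" for j
  proof -
    have fc: "fx j \<in> carrier (poly_ring R)" using fx[OF that] by blast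
    have dc: "fx j pdiv p \<in> carrier (poly_ring R)" using long_division_closed(1)[OF carrier_is_subfield fc p(1)] .
    have "fx j = (p \<otimes>\<^bsub>poly_ring R\<^esub> (fx j pdiv p)) \<oplus>\<^bsub>poly_ring R\<^esub> v0 j"
      unfolding v0_def using pdiv_pmod[OF carrier_is_subfield fc p(1)] .
    then have "psi (fx j) = psi p \<otimes>\<^bsub>K\<^esub> psi (fx j pdiv p) \<oplus>\<^bsub>K\<^esub> psi (v0 j)"
      using Psi.hom_add Psi.hom_mult p(1) dc v0c[OF that] by (metis P.m_closed)
    also have "\<dots> = psi (v0 j)" using pk ring_hom_closed[OF psi dc] ring_hom_closed[OF psi v0c[OF that]] by simp
    finally show ?thesis using fx[OF that] by simp
  qed
  obtain j0 where j0: "j0<n" "x j0 \<noteq> \<zero>\<^bsub>K\<^esub>" using x(2) by blast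
  have nd: "\<exists>j<n. \<not> p pdivides v0 j"
    using kerI[OF v0c[OF j0(1)]] psiv0[OF j0(1)] j0 by auto
  have pc: "\<And>i j l. i<n \<Longrightarrow> j<n \<Longrightarrow> l<n \<Longrightarrow> poly_of_const (c i j l) \<in> carrier (poly_ring R)"
    using poly_of_const_props(1) c by blast
  have Fc0: "base_change_eval (poly_ring R) poly_of_const n c v0 \<in> carrier (poly_ring R)"
    using P.bce_closed[where n=n and hh=poly_of_const and c=c and x=v0, OF pc v0c] .
  have "psi (base_change_eval (poly_ring R) poly_of_const n c v0) =
     base_change_eval K (psi \<circ> poly_of_const) n c (psi \<circ> v0)"
    using bce_hom[where n=n and hh=poly_of_const and c=c and x=v0, OF psic pc v0c] .
  also have "\<dots> = base_change_eval K hK n c x"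
  proof (rule K.bce_cong2)
    fix i j l assume "i<n" "j<n" "l<n"
    then show "(psi \<circ> poly_of_const) (c i j l) = hK (c i j l)" using psiconst c by simp
    show "hK (c i j l) \<in> carrier K" using c \<open>i<n\<close> \<open>j<n\<close> \<open>l<n\<close> ring_hom_closed[OF h] by blast
  next
    fix j assume "j<n" then show "(psi \<circ> v0) j = x j" using psiv0 by simp
  next
    fix i assume "i<n" then show "x i \<in> carrier K" using x(1) by blast
  qed
  also have "\<dots> = \<zero>\<^bsub>K\<^esub>" using x(3) .
  finally have "p pdivides base_change_eval (poly_ring R) poly_of_const n c v0" using kerI[OF Fc0] by simp
  then show ?thesis using p(1) pirr dp v0c v0l nd by blast
qed

end


theorem theorem3p8:
  fixes k :: "'a ring" and n :: nat and c :: "nat \<Rightarrow> nat \<Rightarrow> nat \<Rightarrow> 'a"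
    and K :: "'b ring" and hK :: "'a \<Rightarrow> 'b"
  assumes "field k"
    and "cubic_form k n c"
    and "field_extension k K hK"
    and "simple_field_extension k K hK"
    and "ext_degree_eq k K hK 4"
    and "isotropic_over K hK n c"
  shows "\<exists>(L :: 'a list ring) (hL :: 'a \<Rightarrow> 'a list) d.
           field_extension k L hL \<and> d \<in> {1, 5} \<and> ext_degree_eq k L hL d \<and>
           isotropic_over L hL n c"
proof -
  interpret k: field k by fact
  have c: "\<And>i j l. i<n \<Longrightarrow> j<n \<Longrightarrow> l<n \<Longrightarrow> c i j l \<in> carrier k"
    using assms(2) unfolding cubic_form_def by blast
  have fK: "field K" and h: "hK \<in> ring_hom k K" using assms(3) unfolding field_extension_def by auto
  obtain \<alpha> where a: "\<alpha> \<in> carrier K" and gen: "carrier K = generate_field K (insert \<alpha> (hK ` carrier k))"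
    using assms(4) unfolding simple_field_extension_def by blast
  have dim: "ring.dimension K 4 (hK ` carrier k) (carrier K)" using assms(5) unfolding ext_degree_eq_def .
  obtain p v0 where p: "p \<in> carrier (poly_ring k)" "pirreducible\<^bsub>k\<^esub> (carrier k) p" "degree p = 4"
    and v0: "\<forall>j<n. v0 j \<in> carrier (poly_ring k)" "\<forall>j<n. length (v0 j) \<le> degree p"
       "\<exists>j<n. \<not> p pdivides\<^bsub>k\<^esub> v0 j" "p pdivides\<^bsub>k\<^esub> base_change_eval (poly_ring k) (ring.poly_of_const k) n c v0"
    using k.K_side[OF c fK h a gen dim assms(6)] by blast
  have v0c: "\<And>j. j<n \<Longrightarrow> v0 j \<in> carrier (poly_ring k)" using v0(1) by blast
  have v0l: "\<And>j. j<n \<Longrightarrow> length (v0 j) \<le> degree p" using v0(2) by blast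
  show ?thesis using k.main_poly[OF c p v0c v0l v0(3,4)] .
qed

end
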